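(* Let $\sigma$ be a signature and $\mathcal K$ a nonempty class of causal teams over $\sigma$ (respectively, of generalized causal teams over $\sigma$). The following are equivalent: (i) $\mathcal K$ is causally downward closed and closed under equivalence; (ii) $\mathcal K=\{T:T\models\varphi\}$ for some $\mathcal{CO}_{\sqcup}[\sigma]$-formula $\varphi$; (iii) $\mathcal K=\{T:T\models\varphi\}$ for some $\mathcal{COD}[\sigma]$-formula $\varphi$ (satisfaction being $\models^c$, respectively $\models^g$).
   Context: A signature $\sigma=(\mathrm{Dom},\mathrm{Ran})$: $\mathrm{Dom}$ is a nonempty finite set of variables and each $X\in\mathrm{Dom}$ has a nonempty finite range $\mathrm{Ran}(X)$. For a sequence $\mathbf X=\langle X_1,\dots,X_n\rangle$, $\mathrm{Ran}(\mathbf X)=\prod_i\mathrm{Ran}(X_i)$; $\mathbf X=\mathbf x$ abbreviates $X_1=x_1\wedge\dots\wedge X_n=x_n$; it is inconsistent if it contains $X=x$ and $X=x'$ with $x\ne x'$. Languages: $\mathcal{CO}[\sigma]$: $\alpha::=X=x\mid\neg\alpha\mid\alpha\wedge\alpha\mid\alpha\vee\alpha\mid\mathbf X=\mathbf x\;\Box\!\!\rightarrow\alpha$. $\mathcal{CO}_{\sqcup}[\sigma]$: $\varphi::=X=x\mid\neg\alpha\mid\varphi\wedge\varphi\mid\varphi\vee\varphi\mid\varphi\sqcup\varphi\mid\mathbf X=\mathbf x\;\Box\!\!\rightarrow\varphi$ ($\alpha\in\mathcal{CO}[\sigma]$, $\sqcup$ the global disjunction). $\mathcal{COD}[\sigma]$: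 $\varphi::=X=x\mid{=}(\mathbf X;Y)\mid\neg\alpha\mid\varphi\wedge\varphi\mid\varphi\vee\varphi\mid\mathbf X=\mathbf x\;\Box\!\!\rightarrow\varphi$ ($\alpha\in\mathcal{CO}[\sigma]$). Assignments $s$ on $\mathrm{Dom}$ with $s(X)\in\mathrm{Ran}(X)$ form $\mathbb A_\sigma$. A system of functions $\mathcal F$ assigns to each $V$ in $\mathrm{En}(\mathcal F)\subseteq\mathrm{Dom}$ a parent set $PA^{\mathcal F}_V\subseteq\mathrm{Dom}\setminus\{V\}$ and $\mathcal F_V:\mathrm{Ran}(PA^{\mathcal F}_V)\to\mathrm{Ran}(V)$; $\mathrm{Ex}(\mathcal F)=\mathrm{Dom}\setminus\mathrm{En}(\mathcal F)$; only recursive systems (acyclic parent graph) are considered, forming the finite set $\mathbb F_\sigma$. $s$ is compatible with $\mathcal F$ if $s(V)=\mathcal F_V(s(PA^{\mathcal F}_V))$ for $V\in\mathrm{En}(\mathcal F)$; $\mathbb S_\sigma$ is the set of compatible pairs $(s,\mathcal F)$. For consistent $\mathbf X=\mathbf x$, $\mathcal F_{\mathbf X=\mathbf x}$ restricts $\mathcal F$ to $\mathrm{En}(\mathcal F)\setminus\mathbf X$, and $s^{\mathcal F}_{\mathbf X=\mathbf x}$ is defined recursively: $X_i\mapsto x_i$; $V\mapsto s(V)$ for $V\in\mathrm{Ex}(\mathcal F)\setminus\mathbf X$; $V\mapsto\mathcal F_V(s^{\mathcal F}_{\mathbf X=\mathbf x}(PA^{\mathcal F}_V))$ otherwise. Causal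 team: $T=(T^-,\mathcal F)$, $\mathcal F\in\mathbb F_\sigma$, $T^-$ a set of assignments compatible with $\mathcal F$; all teams with empty team component are identified as $\emptyset$. Causal subteam: $(S^-,\mathcal F)$ with $S^-\subseteq T^-$ (and $\emptyset$). $T_{\mathbf X=\mathbf x}=(\{s^{\mathcal F}_{\mathbf X=\mathbf x}:s\in T^-\},\mathcal F_{\mathbf X=\mathbf x})$. $\models^c$: $T\models X=x$ iff $s(X)=x$ for all $s\in T^-$; $T\models{=}(\mathbf X;Y)$ iff for all $s,s'\in T^-$, $s(\mathbf X)=s'(\mathbf X)$ implies $s(Y)=s'(Y)$; $T\models\neg\alpha$ iff $(\{s\},\mathcal F)\not\models\alpha$ for all $s\in T^-$; $\wedge$ classical; $T\models\varphi\vee\psi$ iff there are causal subteams $T_1,T_2$ with $T_1^-\cup T_2^-=T^-$, $T_1\models\varphi$, $T_2\models\psi$; $T\models\varphi\sqcup\psi$ iff $T\models\varphi$ or $T\models\psi$; $T\models\mathbf X=\mathbf x\;\Box\!\!\rightarrow\varphi$ iff $\mathbf X=\mathbf x$ is inconsistent or $T_{\mathbf X=\mathbf x}\models\varphi$. Generalized causal team: a set $T\subseteq\mathbb S_\sigma$, $T^-=\{s:(s,\mathcal F)\in T\}$, causal subteams are subsets, $T_{\mathbf X=\mathbf x}=\{(s^{\mathcal F}_{\mathbf X=\mathbf x},\mathcal F_{\mathbf X=\mathbf x}):(s,\mathcal F)\in T\}$; $\models^g$ has the same clauses except $T\models\neg\alpha$ iff $\{(s,\mathcal F)\}\not\models\alpha$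 for all $(s,\mathcal F)\in T$, and $T\models\varphi\vee\psi$ iff $T=T_1\cup T_2$ with $T_1\models\varphi$, $T_2\models\psi$. Equivalence: $\mathrm{Cn}(\mathcal F)$ is the set of $V\in\mathrm{En}(\mathcal F)$ with $\mathcal F_V$ constant; $\mathcal F_V\sim\mathcal G_V$ iff $\mathcal F_V(\mathbf x\mathbf y)=\mathcal G_V(\mathbf x\mathbf z)$ for all $\mathbf x\in\mathrm{Ran}(PA^{\mathcal F}_V\cap PA^{\mathcal G}_V)$, $\mathbf y\in\mathrm{Ran}(PA^{\mathcal F}_V\setminus PA^{\mathcal G}_V)$, $\mathbf z\in\mathrm{Ran}(PA^{\mathcal G}_V\setminus PA^{\mathcal F}_V)$; $\mathcal F\sim\mathcal G$ iff $\mathrm{En}(\mathcal F)\setminus\mathrm{Cn}(\mathcal F)=\mathrm{En}(\mathcal G)\setminus\mathrm{Cn}(\mathcal G)$ and $\mathcal F_V\sim\mathcal G_V$ for all $V$ in that set. Nonempty causal teams $(T^-,\mathcal F)\approx(S^-,\mathcal G)$ iff $T^-=S^-$ and $\mathcal F\sim\mathcal G$. For generalized causal teams, $T^{\mathcal F}=\{(s,\mathcal G)\in T:\mathcal G\sim\mathcal F\}$ and $S\approx T$ iff $(S^{\mathcal F})^-=(T^{\mathcal F})^-$ for all $\mathcal F\in\mathbb F_\sigma$. $\mathcal K$ is causally downward closed if $T\in\mathcal K$ and $S$ a causal subteam of $T$ imply $S\in\mathcal K$; closed under equivalence if $T\in\mathcal K$ and $T\approx S$ imply $S\in\mathcal K$.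 *)

theory Defs
  imports Main "HOL-Library.FuncSet"
begin

text \<open>A signature is given by a set Dom of variables (type 'v) and a range function
  Ran :: 'v => 'a set.\<close>

definition sig_ok :: "'v set \<Rightarrow> ('v \<Rightarrow> 'a set) \<Rightarrow> bool" where
  "sig_ok D R \<longleftrightarrow> finite D \<and> D \<noteq> {} \<and> (\<forall>X\<in>D. finite (R X) \<and> R X \<noteq> {})"

text \<open>Assignments on Dom: extensional functions (value undefined outside Dom).\<close>
definition assigns :: "'v set \<Rightarrow> ('v \<Rightarrow> 'a set) \<Rightarrow> ('v \<Rightarrow> 'a) set" where
  "assigns D R = PiE D R"

text \<open>A system of functions: endogenous variables, parent sets, and the functions
  F_V : Ran(PA_V) -> Ran(V), where an element of Ran(PA_V) is an extensional function on PA_V.\<close>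
record ('v, 'a) sysf =
  sf_en :: "'v set"
  sf_pa :: "'v \<Rightarrow> 'v set"
  sf_fn :: "'v \<Rightarrow> ('v \<Rightarrow> 'a) \<Rightarrow> 'a"

definition parent_graph :: "('v, 'a) sysf \<Rightarrow> ('v \<times> 'v) set" where
  "parent_graph F = {(W, V). V \<in> sf_en F \<and> W \<in> sf_pa F V}"

text \<open>The (finite) set of recursive systems of functions over the signature (canonically
  represented: no parents / undefined function outside the endogenous variables).\<close>
definition systems :: "'v set \<Rightarrow> ('v \<Rightarrow> 'a set) \<Rightarrow> ('v, 'a) sysf set" where
  "systems D R = {F. sf_en F \<subseteq> D
      \<and> (\<forall>V. V \<notin> sf_en F \<longrightarrow> sf_pa F V = {} \<and> sf_fn F V = (\<lambda>_. undefined))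
      \<and> (\<forall>V\<in>sf_en F. sf_pa F V \<subseteq> D - {V}
            \<and> sf_fn F V \<in> PiE (PiE (sf_pa F V) R) (\<lambda>_. R V))
      \<and> acyclic (parent_graph F)}"

definition compatible :: "('v \<Rightarrow> 'a) \<Rightarrow> ('v, 'a) sysf \<Rightarrow> bool" where
  "compatible s F \<longleftrightarrow> (\<forall>V\<in>sf_en F. s V = sf_fn F V (restrict s (sf_pa F V)))"

definition compat_pairs :: "'v set \<Rightarrow> ('v \<Rightarrow> 'a set) \<Rightarrow> (('v \<Rightarrow> 'a) \<times> ('v, 'a) sysf) set" where
  "compat_pairs D R = {(s, F). F \<in> systems D R \<and> s \<in> assigns D R \<and> compatible s F}"

type_synonym ('v, 'a) interv = "('v \<times> 'a) list"

definition consistent :: "('v, 'a) interv \<Rightarrow> bool" where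
  "consistent xs \<longleftrightarrow> (\<forall>(X, x)\<in>set xs. \<forall>(X', x')\<in>set xs. X = X' \<longrightarrow> x = x')"

definition ivars :: "('v, 'a) interv \<Rightarrow> 'v set" where
  "ivars xs = fst ` set xs"

definition sys_do :: "('v, 'a) interv \<Rightarrow> ('v, 'a) sysf \<Rightarrow> ('v, 'a) sysf" where
  "sys_do xs F = \<lparr> sf_en = sf_en F - ivars xs,
     sf_pa = (\<lambda>V. if V \<in> sf_en F - ivars xs then sf_pa F V else {}),
     sf_fn = (\<lambda>V. if V \<in> sf_en F - ivars xs then sf_fn F V else (\<lambda>_. undefined)) \<rparr>"

text \<open>s^F_{X=x}: the recursive definition is realised by iterating the defining equations
  card Dom times starting from s with X set to x (for recursive F this reaches the
  fixed point, i.e. the recursively defined assignment).\<close>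
definition do_assign :: "'v set \<Rightarrow> ('v, 'a) interv \<Rightarrow> ('v, 'a) sysf \<Rightarrow> ('v \<Rightarrow> 'a) \<Rightarrow> ('v \<Rightarrow> 'a)" where
  "do_assign D xs F s =
     ((\<lambda>t V. if V \<in> ivars xs then the (map_of xs V)
             else if V \<in> sf_en F then sf_fn F V (restrict t (sf_pa F V))
             else s V) ^^ card D)
     (\<lambda>V. if V \<in> ivars xs then the (map_of xs V) else s V)"

datatype ('v, 'a) fm =
    Eq 'v 'a
  | Dep "'v list" 'v
  | Neg "('v, 'a) fm"
  | Conj "('v, 'a) fm" "('v, 'a) fm"
  | Disj "('v, 'a) fm" "('v, 'a) fm"
  | GDisj "('v, 'a) fm" "('v, 'a) fm"
  | Cf "('v, 'a) interv" "('v, 'a) fm"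

fun wf_fm :: "'v set \<Rightarrow> ('v \<Rightarrow> 'a set) \<Rightarrow> ('v, 'a) fm \<Rightarrow> bool" where
  "wf_fm D R (Eq X x) = (X \<in> D \<and> x \<in> R X)"
| "wf_fm D R (Dep Xs Y) = (set Xs \<subseteq> D \<and> Y \<in> D)"
| "wf_fm D R (Neg a) = wf_fm D R a"
| "wf_fm D R (Conj p q) = (wf_fm D R p \<and> wf_fm D R q)"
| "wf_fm D R (Disj p q) = (wf_fm D R p \<and> wf_fm D R q)"
| "wf_fm D R (GDisj p q) = (wf_fm D R p \<and> wf_fm D R q)"
| "wf_fm D R (Cf xs p) = ((\<forall>(X, x)\<in>set xs. X \<in> D \<and> x \<in> R X) \<and> wf_fm D R p)"

fun is_CO :: "('v, 'a) fm \<Rightarrow> bool" where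
  "is_CO (Eq X x) = True"
| "is_CO (Dep Xs Y) = False"
| "is_CO (Neg a) = is_CO a"
| "is_CO (Conj p q) = (is_CO p \<and> is_CO q)"
| "is_CO (Disj p q) = (is_CO p \<and> is_CO q)"
| "is_CO (GDisj p q) = False"
| "is_CO (Cf xs p) = is_CO p"

fun is_COsq :: "('v, 'a) fm \<Rightarrow> bool" where
  "is_COsq (Eq X x) = True"
| "is_COsq (Dep Xs Y) = False"
| "is_COsq (Neg a) = is_CO a"
| "is_COsq (Conj p q) = (is_COsq p \<and> is_COsq q)"
| "is_COsq (Disj p q) = (is_COsq p \<and> is_COsq q)"
| "is_COsq (GDisj p q) = (is_COsq p \<and> is_COsq q)"
| "is_COsq (Cf xs p) = is_COsq p"

fun is_COD :: "('v, 'a) fm \<Rightarrow> bool" where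
  "is_COD (Eq X x) = True"
| "is_COD (Dep Xs Y) = True"
| "is_COD (Neg a) = is_CO a"
| "is_COD (Conj p q) = (is_COD p \<and> is_COD q)"
| "is_COD (Disj p q) = (is_COD p \<and> is_COD q)"
| "is_COD (GDisj p q) = False"
| "is_COD (Cf xs p) = is_COD p"

type_synonym ('v, 'a) cteam = "('v \<Rightarrow> 'a) set \<times> ('v, 'a) sysf"

definition empty_sys :: "('v, 'a) sysf" where
  "empty_sys = \<lparr> sf_en = {}, sf_pa = (\<lambda>_. {}), sf_fn = (\<lambda>_ _. undefined) \<rparr>"

text \<open>All causal teams with empty team component are identified with the single
  representative ({}, empty_sys).\<close>
definition causal_teams :: "'v set \<Rightarrow> ('v \<Rightarrow> 'a set) \<Rightarrow> ('v, 'a) cteam set" where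
  "causal_teams D R = {(S, F). F \<in> systems D R \<and> S \<subseteq> assigns D R
      \<and> (\<forall>s\<in>S. compatible s F) \<and> (S = {} \<longrightarrow> F = empty_sys)}"

definition ct_norm :: "('v, 'a) cteam \<Rightarrow> ('v, 'a) cteam" where
  "ct_norm T = (if fst T = {} then ({}, empty_sys) else T)"

definition causal_subteam :: "('v, 'a) cteam \<Rightarrow> ('v, 'a) cteam \<Rightarrow> bool" where
  "causal_subteam S T \<longleftrightarrow> (\<exists>S'. S' \<subseteq> fst T \<and> S = ct_norm (S', snd T))"

definition team_do :: "'v set \<Rightarrow> ('v, 'a) interv \<Rightarrow> ('v, 'a) cteam \<Rightarrow> ('v, 'a) cteam" where
  "team_do D xs T = (do_assign D xs (snd T) ` fst T, sys_do xs (snd T))"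

fun sat_c :: "'v set \<Rightarrow> ('v, 'a) cteam \<Rightarrow> ('v, 'a) fm \<Rightarrow> bool" where
  "sat_c D T (Eq X x) = (\<forall>s\<in>fst T. s X = x)"
| "sat_c D T (Dep Xs Y) = (\<forall>s\<in>fst T. \<forall>s'\<in>fst T. map s Xs = map s' Xs \<longrightarrow> s Y = s' Y)"
| "sat_c D T (Neg a) = (\<forall>s\<in>fst T. \<not> sat_c D ({s}, snd T) a)"
| "sat_c D T (Conj p q) = (sat_c D T p \<and> sat_c D T q)"
| "sat_c D T (Disj p q) = (\<exists>S1 S2. S1 \<subseteq> fst T \<and> S2 \<subseteq> fst T \<and> S1 \<union> S2 = fst T
       \<and> sat_c D (S1, snd T) p \<and> sat_c D (S2, snd T) q)"
| "sat_c D T (GDisj p q) = (sat_c D T p \<or> sat_c D T q)"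
| "sat_c D T (Cf xs p) = (\<not> consistent xs \<or> sat_c D (team_do D xs T) p)"

type_synonym ('v, 'a) gteam = "(('v \<Rightarrow> 'a) \<times> ('v, 'a) sysf) set"

definition gen_teams :: "'v set \<Rightarrow> ('v \<Rightarrow> 'a set) \<Rightarrow> ('v, 'a) gteam set" where
  "gen_teams D R = Pow (compat_pairs D R)"

definition gteam_do :: "'v set \<Rightarrow> ('v, 'a) interv \<Rightarrow> ('v, 'a) gteam \<Rightarrow> ('v, 'a) gteam" where
  "gteam_do D xs T = (\<lambda>(s, F). (do_assign D xs F s, sys_do xs F)) ` T"

fun sat_g :: "'v set \<Rightarrow> ('v, 'a) gteam \<Rightarrow> ('v, 'a) fm \<Rightarrow> bool" where
  "sat_g D T (Eq X x) = (\<forall>p\<in>T. fst p X = x)"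
| "sat_g D T (Dep Xs Y) = (\<forall>p\<in>T. \<forall>p'\<in>T. map (fst p) Xs = map (fst p') Xs \<longrightarrow> fst p Y = fst p' Y)"
| "sat_g D T (Neg a) = (\<forall>p\<in>T. \<not> sat_g D {p} a)"
| "sat_g D T (Conj p q) = (sat_g D T p \<and> sat_g D T q)"
| "sat_g D T (Disj p q) = (\<exists>T1 T2. T = T1 \<union> T2 \<and> sat_g D T1 p \<and> sat_g D T2 q)"
| "sat_g D T (GDisj p q) = (sat_g D T p \<or> sat_g D T q)"
| "sat_g D T (Cf xs p) = (\<not> consistent xs \<or> sat_g D (gteam_do D xs T) p)"

definition const_vars :: "('v \<Rightarrow> 'a set) \<Rightarrow> ('v, 'a) sysf \<Rightarrow> 'v set" where
  "const_vars R F = {V \<in> sf_en F. \<forall>f\<in>PiE (sf_pa F V) R. \<forall>g\<in>PiE (sf_pa F V) R.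
       sf_fn F V f = sf_fn F V g}"

definition fn_sim :: "('v \<Rightarrow> 'a set) \<Rightarrow> ('v, 'a) sysf \<Rightarrow> ('v, 'a) sysf \<Rightarrow> 'v \<Rightarrow> bool" where
  "fn_sim R F G V \<longleftrightarrow> (\<forall>f\<in>PiE (sf_pa F V) R. \<forall>g\<in>PiE (sf_pa G V) R.
       (\<forall>W\<in>sf_pa F V \<inter> sf_pa G V. f W = g W) \<longrightarrow> sf_fn F V f = sf_fn G V g)"

definition sys_sim :: "('v \<Rightarrow> 'a set) \<Rightarrow> ('v, 'a) sysf \<Rightarrow> ('v, 'a) sysf \<Rightarrow> bool" where
  "sys_sim R F G \<longleftrightarrow> sf_en F - const_vars R F = sf_en G - const_vars R G
     \<and> (\<forall>V\<in>sf_en F - const_vars R F. fn_sim R F G V)"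

definition ct_equiv :: "('v \<Rightarrow> 'a set) \<Rightarrow> ('v, 'a) cteam \<Rightarrow> ('v, 'a) cteam \<Rightarrow> bool" where
  "ct_equiv R T S \<longleftrightarrow> fst T \<noteq> {} \<and> fst S \<noteq> {} \<and> fst T = fst S \<and> sys_sim R (snd T) (snd S)"

definition gsub :: "('v \<Rightarrow> 'a set) \<Rightarrow> ('v, 'a) sysf \<Rightarrow> ('v, 'a) gteam \<Rightarrow> ('v, 'a) gteam" where
  "gsub R F T = {(s, G) \<in> T. sys_sim R G F}"

definition g_equiv :: "'v set \<Rightarrow> ('v \<Rightarrow> 'a set) \<Rightarrow> ('v, 'a) gteam \<Rightarrow> ('v, 'a) gteam \<Rightarrow> bool" where
  "g_equiv D R S T \<longleftrightarrow> (\<forall>F\<in>systems D R. fst ` gsub R F S = fst ` gsub R F T)"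

definition c_down_closed :: "('v, 'a) cteam set \<Rightarrow> bool" where
  "c_down_closed K \<longleftrightarrow> (\<forall>T\<in>K. \<forall>S. causal_subteam S T \<longrightarrow> S \<in> K)"

definition c_equiv_closed :: "'v set \<Rightarrow> ('v \<Rightarrow> 'a set) \<Rightarrow> ('v, 'a) cteam set \<Rightarrow> bool" where
  "c_equiv_closed D R K \<longleftrightarrow> (\<forall>T\<in>K. \<forall>S\<in>causal_teams D R. ct_equiv R T S \<longrightarrow> S \<in> K)"

definition g_down_closed :: "('v, 'a) gteam set \<Rightarrow> bool" where
  "g_down_closed K \<longleftrightarrow> (\<forall>T\<in>K. \<forall>S. S \<subseteq> T \<longrightarrow> S \<in> K)"

definition g_equiv_closed :: "'v set \<Rightarrow> ('v \<Rightarrow> 'a set) \<Rightarrow> ('v, 'a) gteam set \<Rightarrow> bool" where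
  "g_equiv_closed D R K \<longleftrightarrow> (\<forall>T\<in>K. \<forall>S\<in>gen_teams D R. g_equiv D R T S \<longrightarrow> S \<in> K)"

end

theory Submission
  imports Defs
begin

definition wsys :: "'v set \<Rightarrow> ('v \<Rightarrow> 'a set) \<Rightarrow> ('v, 'a) sysf \<Rightarrow> bool" where
  "wsys D R F \<longleftrightarrow> sf_en F \<subseteq> D \<and> (\<forall>V\<in>sf_en F. sf_pa F V \<subseteq> D - {V}
      \<and> (\<forall>f\<in>PiE (sf_pa F V) R. sf_fn F V f \<in> R V))"

definition wpair :: "'v set \<Rightarrow> ('v \<Rightarrow> 'a set) \<Rightarrow> ('v \<Rightarrow> 'a) \<times> ('v, 'a) sysf \<Rightarrow> bool" where
  "wpair D R p \<longleftrightarrow> fst p \<in> PiE D R \<and> wsys D R (snd p)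
     \<and> (\<forall>V\<in>const_vars R (snd p). fst p V = sf_fn (snd p) V (restrict (fst p) (sf_pa (snd p) V)))"

definition rel :: "('v \<Rightarrow> 'a set) \<Rightarrow> ('v \<Rightarrow> 'a) \<times> ('v, 'a) sysf \<Rightarrow> ('v \<Rightarrow> 'a) \<times> ('v, 'a) sysf \<Rightarrow> bool" where
  "rel R p q \<longleftrightarrow> fst p = fst q \<and> sys_sim R (snd p) (snd q)"

definition Mrel :: "('v \<Rightarrow> 'a set) \<Rightarrow> ('v, 'a) gteam \<Rightarrow> ('v, 'a) gteam \<Rightarrow> bool" where
  "Mrel R S T \<longleftrightarrow> (\<forall>p\<in>S. \<exists>q\<in>T. rel R p q) \<and> (\<forall>q\<in>T. \<exists>p\<in>S. rel R p q)"

lemma wpairD: assumes "wpair D R (s, F)"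
  shows "s \<in> PiE D R" "wsys D R F" "V \<in> const_vars R F \<Longrightarrow> s V = sf_fn F V (restrict s (sf_pa F V))"
  using assms unfolding wpair_def by simp_all

lemma wsysD: assumes "wsys D R F"
  shows "sf_en F \<subseteq> D" "V \<in> sf_en F \<Longrightarrow> sf_pa F V \<subseteq> D - {V}"
    "V \<in> sf_en F \<Longrightarrow> f \<in> PiE (sf_pa F V) R \<Longrightarrow> sf_fn F V f \<in> R V"
  using assms unfolding wsys_def by blast+

lemma systems_wsys: "F \<in> systems D R \<Longrightarrow> wsys D R F"
  unfolding systems_def wsys_def by (auto intro: PiE_mem)

lemma compat_wpair: "p \<in> compat_pairs D R \<Longrightarrow> wpair D R p"
  unfolding compat_pairs_def wpair_def assigns_def compatible_def const_vars_def
  by (auto dest: systems_wsys)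

lemma sim_sym: "sys_sim R F G \<Longrightarrow> sys_sim R G F"
  unfolding sys_sim_def fn_sim_def by (metis Int_commute)

lemma sim_refl: "sys_sim R F F"
  unfolding sys_sim_def fn_sim_def by (metis IntI PiE_ext)

lemma sig_ne: "sig_ok D R \<Longrightarrow> X \<in> D \<Longrightarrow> (SOME r. r \<in> R X) \<in> R X"
  unfolding sig_ok_def by (metis some_in_eq)

lemma sim_trans:
  assumes sig: "sig_ok D R" and w: "wsys D R F" "wsys D R G" "wsys D R H"
    and fg: "sys_sim R F G" and gh: "sys_sim R G H"
  shows "sys_sim R F H"
  unfolding sys_sim_def
proof
  show "sf_en F - const_vars R F = sf_en H - const_vars R H" using fg gh unfolding sys_sim_def by simp
  show "\<forall>V\<in>sf_en F - const_vars R F. fn_sim R F H V"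
  proof
    fix V assume V: "V \<in> sf_en F - const_vars R F"
    hence VG: "V \<in> sf_en G - const_vars R G" using fg unfolding sys_sim_def by simp
    have pG: "sf_pa G V \<subseteq> D" using w(2) VG unfolding wsys_def by auto
    show "fn_sim R F H V" unfolding fn_sim_def
    proof (intro ballI impI)
      fix f h assume f: "f \<in> PiE (sf_pa F V) R" and h: "h \<in> PiE (sf_pa H V) R"
        and ag: "\<forall>W\<in>sf_pa F V \<inter> sf_pa H V. f W = h W"
      define g where "g = restrict (\<lambda>W. if W \<in> sf_pa F V then f W else if W \<in> sf_pa H V then h W
          else (SOME r. r \<in> R W)) (sf_pa G V)"
      have g: "g \<in> PiE (sf_pa G V) R" unfolding g_def restrict_PiE_iff
      proof
        fix W assume W: "W \<in> sf_pa G V"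
        show "(if W \<in> sf_pa F V then f W else if W \<in> sf_pa H V then h W else (SOME r. r \<in> R W)) \<in> R W"
          using PiE_mem[OF f] PiE_mem[OF h] sig_ne[OF sig] W pG by auto
      qed
      have "sf_fn F V f = sf_fn G V g" using fg V f g unfolding sys_sim_def fn_sim_def g_def by auto
      also have "\<dots> = sf_fn H V h" using gh VG g h ag unfolding sys_sim_def fn_sim_def g_def by auto
      finally show "sf_fn F V f = sf_fn H V h" .
    qed
  qed
qed

lemma rel_sym: "rel R p q \<Longrightarrow> rel R q p"
  unfolding rel_def by (auto intro: sim_sym)

lemma rel_refl: "rel R p p"
  unfolding rel_def by (auto intro: sim_refl)

lemma rel_trans: "sig_ok D R \<Longrightarrow> wpair D R p \<Longrightarrow> wpair D R q \<Longrightarrow> wpair D R r \<Longrightarrow>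
   rel R p q \<Longrightarrow> rel R q r \<Longrightarrow> rel R p r"
  unfolding rel_def wpair_def using sim_trans by metis


definition stepf :: "('v, 'a) interv \<Rightarrow> ('v, 'a) sysf \<Rightarrow> ('v \<Rightarrow> 'a) \<Rightarrow> ('v \<Rightarrow> 'a) \<Rightarrow> ('v \<Rightarrow> 'a)" where
  "stepf xs F s = (\<lambda>t V. if V \<in> ivars xs then the (map_of xs V)
             else if V \<in> sf_en F then sf_fn F V (restrict t (sf_pa F V))
             else s V)"

definition initf :: "('v, 'a) interv \<Rightarrow> ('v \<Rightarrow> 'a) \<Rightarrow> ('v \<Rightarrow> 'a)" where
  "initf xs s = (\<lambda>V. if V \<in> ivars xs then the (map_of xs V) else s V)"

lemma do_assign_alt: "do_assign D xs F s = (stepf xs F s ^^ card D) (initf xs s)"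
  unfolding do_assign_def stepf_def initf_def by simp

definition wfi :: "'v set \<Rightarrow> ('v \<Rightarrow> 'a set) \<Rightarrow> ('v, 'a) interv \<Rightarrow> bool" where
  "wfi D R xs \<longleftrightarrow> (\<forall>(X, x)\<in>set xs. X \<in> D \<and> x \<in> R X)"

lemma map_of_in: "wfi D R xs \<Longrightarrow> V \<in> ivars xs \<Longrightarrow> the (map_of xs V) \<in> R V"
proof -
  assume w: "wfi D R xs" and V: "V \<in> ivars xs"
  then obtain x where x: "map_of xs V = Some x" unfolding ivars_def
    by (metis map_of_eq_None_iff option.exhaust)
  hence "(V, x) \<in> set xs" by (rule map_of_SomeD)
  thus ?thesis using w x unfolding wfi_def by auto
qed

lemma ivars_sub: "wfi D R xs \<Longrightarrow> ivars xs \<subseteq> D"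
  unfolding wfi_def ivars_def by auto

lemma restrict_in: "t \<in> PiE D R \<Longrightarrow> P \<subseteq> D \<Longrightarrow> restrict t P \<in> PiE P R"
  by (auto simp: restrict_PiE_iff intro: PiE_mem)

lemma init_PiE: "wfi D R xs \<Longrightarrow> s \<in> PiE D R \<Longrightarrow> initf xs s \<in> PiE D R"
  unfolding initf_def using map_of_in ivars_sub
  by (fastforce simp: PiE_iff extensional_def)

lemma step_PiE:
  assumes w: "wfi D R xs" and F: "wsys D R F" and s: "s \<in> PiE D R" and t: "t \<in> PiE D R"
  shows "stepf xs F s t \<in> PiE D R"
proof -
  have "stepf xs F s t i \<in> R i" if i: "i \<in> D" for i
  proof (cases "i \<in> ivars xs")
    case True thus ?thesis using map_of_in[OF w] unfolding stepf_def by simp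
  next
    case False
    show ?thesis
    proof (cases "i \<in> sf_en F")
      case True
      have "sf_pa F i \<subseteq> D" using F True unfolding wsys_def by auto
      hence "restrict t (sf_pa F i) \<in> PiE (sf_pa F i) R" using restrict_in[OF t] by auto
      thus ?thesis using F True False unfolding wsys_def stepf_def by auto
    next
      case False2: False
      thus ?thesis using False PiE_mem[OF s i] unfolding stepf_def by simp
    qed
  qed
  moreover have "stepf xs F s t i = undefined" if i: "i \<notin> D" for i
  proof -
    have "i \<notin> ivars xs" "i \<notin> sf_en F" using i ivars_sub[OF w] F unfolding wsys_def by auto
    thus ?thesis using s i unfolding stepf_def by (auto simp: PiE_iff extensional_def)
  qed
  ultimately show ?thesis by (auto simp: PiE_iff extensional_def)
qed

lemma iter_PiE: "wfi D R xs \<Longrightarrow> wsys D R F \<Longrightarrow> s \<in> PiE D R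
   \<Longrightarrow> (stepf xs F s ^^ k) (initf xs s) \<in> PiE D R"
proof (induction k)
  case 0 thus ?case using init_PiE by simp
next
  case (Suc k) thus ?case using step_PiE by simp
qed

lemma const_fn: "V \<in> const_vars R F \<Longrightarrow> f \<in> PiE (sf_pa F V) R \<Longrightarrow> g \<in> PiE (sf_pa F V) R
   \<Longrightarrow> sf_fn F V f = sf_fn F V g"
  unfolding const_vars_def by blast

lemma const_val: "wpair D R (s, F) \<Longrightarrow> V \<in> const_vars R F \<Longrightarrow> t \<in> PiE D R
   \<Longrightarrow> sf_fn F V (restrict t (sf_pa F V)) = s V"
proof -
  assume p: "wpair D R (s, F)" and V: "V \<in> const_vars R F" and t: "t \<in> PiE D R"
  have VE: "V \<in> sf_en F" using V unfolding const_vars_def by auto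
  have pa: "sf_pa F V \<subseteq> D" using wsysD(2)[OF wpairD(2)[OF p] VE] by blast
  have s: "s \<in> PiE D R" using wpairD(1)[OF p] .
  have "sf_fn F V (restrict t (sf_pa F V)) = sf_fn F V (restrict s (sf_pa F V))"
    by (rule const_fn[OF V restrict_in[OF t pa] restrict_in[OF s pa]])
  also have "\<dots> = s V" using wpairD(3)[OF p V] by simp
  finally show ?thesis .
qed

lemma step_nc: "wpair D R (s, F) \<Longrightarrow> t \<in> PiE D R \<Longrightarrow> U \<notin> ivars xs
   \<Longrightarrow> U \<notin> sf_en F - const_vars R F \<Longrightarrow> stepf xs F s t U = s U"
proof -
  assume p: "wpair D R (s, F)" and t: "t \<in> PiE D R" and U: "U \<notin> ivars xs" "U \<notin> sf_en F - const_vars R F"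
  show ?thesis
  proof (cases "U \<in> sf_en F")
    case True
    hence "U \<in> const_vars R F" using U by auto
    thus ?thesis using const_val[OF p _ t] U True unfolding stepf_def by simp
  qed (use U in \<open>simp add: stepf_def\<close>)
qed

lemma step_eq:
  assumes sig: "sig_ok D R" and pF: "wpair D R (s, F)" and pG: "wpair D R (s, G)"
    and sim: "sys_sim R F G" and t: "t \<in> PiE D R"
  shows "stepf xs F s t = stepf xs G s t"
proof
  fix U
  show "stepf xs F s t U = stepf xs G s t U"
  proof (cases "U \<in> ivars xs")
    case True thus ?thesis unfolding stepf_def by simp
  next
    case False
    show ?thesis
    proof (cases "U \<in> sf_en F - const_vars R F")
      case True
      hence UG: "U \<in> sf_en G - const_vars R G" using sim unfolding sys_sim_def by simp
      have paF: "sf_pa F U \<subseteq> D" using wsysD(2)[OF wpairD(2)[OF pF], of U] True by blast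
      have paG: "sf_pa G U \<subseteq> D" using wsysD(2)[OF wpairD(2)[OF pG], of U] UG by blast
      have "fn_sim R F G U" using sim True unfolding sys_sim_def by auto
      hence "sf_fn F U (restrict t (sf_pa F U)) = sf_fn G U (restrict t (sf_pa G U))"
        unfolding fn_sim_def using restrict_in[OF t paF] restrict_in[OF t paG] by auto
      thus ?thesis using False True UG unfolding stepf_def by simp
    next
      case False2: False
      hence UG: "U \<notin> sf_en G - const_vars R G" using sim unfolding sys_sim_def by simp
      show ?thesis using step_nc[OF pF t False False2] step_nc[OF pG t False UG] by simp
    qed
  qed
qed

lemma do_eq:
  assumes sig: "sig_ok D R" and pF: "wpair D R (s, F)" and pG: "wpair D R (s, G)"
    and sim: "sys_sim R F G" and w: "wfi D R xs"
  shows "do_assign D xs F s = do_assign D xs G s"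
proof -
  have s: "s \<in> PiE D R" and wF: "wsys D R F" using wpairD[OF pF] by auto
  have "(stepf xs F s ^^ k) (initf xs s) = (stepf xs G s ^^ k) (initf xs s)" for k
  proof (induction k)
    case (Suc k)
    have "(stepf xs F s ^^ k) (initf xs s) \<in> PiE D R" by (rule iter_PiE[OF w wF s])
    thus ?case using Suc step_eq[OF sig pF pG sim] by simp
  qed simp
  thus ?thesis unfolding do_assign_alt by simp
qed

lemma card_pos: "sig_ok D R \<Longrightarrow> card D = Suc (card D - 1)"
  unfolding sig_ok_def by (simp add: card_gt_0_iff)

lemma const_do: "const_vars R (sys_do xs F) = const_vars R F - ivars xs"
  unfolding const_vars_def sys_do_def by auto

lemma sys_do_simps: "sf_en (sys_do xs F) = sf_en F - ivars xs"
  "V \<in> sf_en F - ivars xs \<Longrightarrow> sf_pa (sys_do xs F) V = sf_pa F V"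
  "V \<in> sf_en F - ivars xs \<Longrightarrow> sf_fn (sys_do xs F) V = sf_fn F V"
  unfolding sys_do_def by auto

lemma do_wpair:
  assumes sig: "sig_ok D R" and pF: "wpair D R (s, F)" and w: "wfi D R xs"
  shows "wpair D R (do_assign D xs F s, sys_do xs F)"
proof -
  have s: "s \<in> PiE D R" and wF: "wsys D R F" using wpairD[OF pF] by auto
  have dP: "do_assign D xs F s \<in> PiE D R" unfolding do_assign_alt by (rule iter_PiE[OF w wF s])
  have wD: "wsys D R (sys_do xs F)" unfolding wsys_def sys_do_simps(1)
    using wsysD[OF wF] by (auto simp: sys_do_simps(2,3))
  have "do_assign D xs F s V = sf_fn (sys_do xs F) V (restrict (do_assign D xs F s) (sf_pa (sys_do xs F) V))"
    if V: "V \<in> const_vars R (sys_do xs F)" for V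
  proof -
    have V1: "V \<in> const_vars R F" "V \<notin> ivars xs" using V unfolding const_do by auto
    have VE: "V \<in> sf_en F" using V1 unfolding const_vars_def by auto
    define m where "m = card D - 1"
    have "do_assign D xs F s V = stepf xs F s ((stepf xs F s ^^ m) (initf xs s)) V"
      unfolding do_assign_alt m_def by (subst card_pos[OF sig]) simp
    also have "\<dots> = sf_fn F V (restrict ((stepf xs F s ^^ m) (initf xs s)) (sf_pa F V))"
      using V1 VE unfolding stepf_def by simp
    also have "\<dots> = s V" by (rule const_val[OF pF V1(1) iter_PiE[OF w wF s]])
    also have "\<dots> = sf_fn F V (restrict (do_assign D xs F s) (sf_pa F V))"
      by (rule const_val[OF pF V1(1) dP, symmetric])
    finally show ?thesis using V1 VE by (simp add: sys_do_simps)
  qed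
  thus ?thesis using dP wD unfolding wpair_def by simp
qed

lemma sim_do: assumes sim: "sys_sim R F G" shows "sys_sim R (sys_do xs F) (sys_do xs G)"
proof -
  have e: "sf_en (sys_do xs F) - const_vars R (sys_do xs F) = (sf_en F - const_vars R F) - ivars xs" for F
    unfolding const_do sys_do_simps by blast
  have "fn_sim R (sys_do xs F) (sys_do xs G) V" if V: "V \<in> (sf_en F - const_vars R F) - ivars xs" for V
  proof -
    have VG: "V \<in> (sf_en G - const_vars R G) - ivars xs" using V sim unfolding sys_sim_def by simp
    have "fn_sim R F G V" using sim V unfolding sys_sim_def by auto
    thus ?thesis using V VG unfolding fn_sim_def by (simp add: sys_do_simps)
  qed
  thus ?thesis using sim unfolding sys_sim_def e by simp
qed


definition dop :: "'v set \<Rightarrow> ('v, 'a) interv \<Rightarrow> ('v \<Rightarrow> 'a) \<times> ('v, 'a) sysf \<Rightarrow> ('v \<Rightarrow> 'a) \<times> ('v, 'a) sysf" where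
  "dop D xs p = (do_assign D xs (snd p) (fst p), sys_do xs (snd p))"

lemma gteam_do_dop: "gteam_do D xs T = dop D xs ` T"
  unfolding gteam_do_def dop_def by (auto simp: case_prod_beta)

lemma wpair_dop: "sig_ok D R \<Longrightarrow> wpair D R p \<Longrightarrow> wfi D R xs \<Longrightarrow> wpair D R (dop D xs p)"
  unfolding dop_def using do_wpair[of D R "fst p" "snd p" xs] by simp

lemma rel_dop: assumes sig: "sig_ok D R" and p: "wpair D R p" and q: "wpair D R q"
  and r: "rel R p q" and w: "wfi D R xs"
  shows "rel R (dop D xs p) (dop D xs q)"
proof -
  obtain s F where pe: "p = (s, F)" by (cases p)
  obtain G where qe: "q = (s, G)" using r pe unfolding rel_def by (cases q) auto
  have sim: "sys_sim R F G" using r pe qe unfolding rel_def by simp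
  show ?thesis using do_eq[OF sig p[unfolded pe] q[unfolded qe] sim w] sim_do[OF sim]
    unfolding pe qe dop_def rel_def by simp
qed

lemma wf_Cf_wfi: "wf_fm D R (Cf xs a) \<Longrightarrow> wfi D R xs"
  unfolding wfi_def by simp

lemma sat_empty: "sat_g D {} \<phi>"
  by (induction \<phi>) (auto simp: gteam_do_def)

lemma sat_down: "sat_g D T \<phi> \<Longrightarrow> S \<subseteq> T \<Longrightarrow> sat_g D S \<phi>"
proof (induction \<phi> arbitrary: S T)
  case (Disj a b)
  then obtain T1 T2 where "T = T1 \<union> T2" "sat_g D T1 a" "sat_g D T2 b" by auto
  moreover have "S = (S \<inter> T1) \<union> (S \<inter> T2)" using Disj.prems(2) calculation(1) by auto
  ultimately show ?case using Disj.IH by (metis Int_lower2 sat_g.simps(5))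
next
  case (Cf xs a)
  have "dop D xs ` S \<subseteq> dop D xs ` T" using Cf.prems(2) by (rule image_mono)
  thus ?case using Cf.IH Cf.prems(1) by (auto simp: gteam_do_dop)
qed auto

lemma sat_inv:
  assumes sig: "sig_ok D R"
  shows "wf_fm D R \<phi> \<Longrightarrow> (\<forall>p\<in>S. wpair D R p) \<Longrightarrow> (\<forall>q\<in>T. wpair D R q) \<Longrightarrow> Mrel R S T
     \<Longrightarrow> sat_g D S \<phi> \<Longrightarrow> sat_g D T \<phi>"
proof (induction \<phi> arbitrary: S T)
  case (Eq X x)
  show ?case unfolding sat_g.simps
  proof
    fix q assume q: "q \<in> T"
    obtain p where "p \<in> S" "rel R p q" using Eq.prems(4) q unfolding Mrel_def by blast
    thus "fst q X = x" using Eq.prems(5) unfolding rel_def by auto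
  qed
next
  case (Dep Xs Y)
  show ?case unfolding sat_g.simps
  proof (intro ballI impI)
    fix q q' assume q: "q \<in> T" "q' \<in> T" and m: "map (fst q) Xs = map (fst q') Xs"
    obtain p where p: "p \<in> S" "rel R p q" using Dep.prems(4) q(1) unfolding Mrel_def by blast
    obtain p' where p': "p' \<in> S" "rel R p' q'" using Dep.prems(4) q(2) unfolding Mrel_def by blast
    have e: "fst p = fst q" "fst p' = fst q'" using p(2) p'(2) unfolding rel_def by simp_all
    have "\<forall>p\<in>S. \<forall>p'\<in>S. map (fst p) Xs = map (fst p') Xs \<longrightarrow> fst p Y = fst p' Y"
      using Dep.prems(5) by (simp only: sat_g.simps)
    hence "map (fst p) Xs = map (fst p') Xs \<longrightarrow> fst p Y = fst p' Y" using p(1) p'(1) by blast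
    thus "fst q Y = fst q' Y" using m e by simp
  qed
next
  case (Neg a)
  show ?case unfolding sat_g.simps
  proof (intro ballI notI)
    fix q assume q: "q \<in> T" and sq: "sat_g D {q} a"
    obtain p where p: "p \<in> S" "rel R p q" using Neg.prems(4) q unfolding Mrel_def by blast
    have "Mrel R {q} {p}" using rel_sym[OF p(2)] unfolding Mrel_def by auto
    moreover have "wf_fm D R a" using Neg.prems(1) by simp
    ultimately have "sat_g D {p} a" using Neg.IH[of "{q}" "{p}"] Neg.prems(2,3) q p(1) sq by blast
    thus False using Neg.prems(5) p by auto
  qed
next
  case (Conj a b)
  have wa: "wf_fm D R a" "wf_fm D R b" using Conj.prems(1) by auto
  have "sat_g D S a" "sat_g D S b" using Conj.prems(5) by auto
  thus ?case using Conj.IH(1)[OF wa(1) Conj.prems(2,3,4)] Conj.IH(2)[OF wa(2) Conj.prems(2,3,4)] by simp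
next
  case (GDisj a b)
  have wa: "wf_fm D R a" "wf_fm D R b" using GDisj.prems(1) by auto
  have "sat_g D S a \<or> sat_g D S b" using GDisj.prems(5) by auto
  thus ?case using GDisj.IH(1)[OF wa(1) GDisj.prems(2,3,4)] GDisj.IH(2)[OF wa(2) GDisj.prems(2,3,4)] by auto
next
  case (Disj a b)
  obtain S1 S2 where S: "S = S1 \<union> S2" "sat_g D S1 a" "sat_g D S2 b" using Disj.prems(5) by auto
  define T1 where "T1 = {q\<in>T. \<exists>p\<in>S1. rel R p q}"
  define T2 where "T2 = {q\<in>T. \<exists>p\<in>S2. rel R p q}"
  have m1: "\<forall>p\<in>S. \<exists>q\<in>T. rel R p q" and m2: "\<forall>q\<in>T. \<exists>p\<in>S. rel R p q"
    using Disj.prems(4) unfolding Mrel_def by auto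
  have TT: "T = T1 \<union> T2"
  proof
    show "T \<subseteq> T1 \<union> T2"
    proof
      fix q assume q: "q \<in> T"
      then obtain p where "p \<in> S" "rel R p q" using m2 by blast
      thus "q \<in> T1 \<union> T2" using q S(1) unfolding T1_def T2_def by blast
    qed
  qed (auto simp: T1_def T2_def)
  have M1: "Mrel R S1 T1" unfolding Mrel_def
  proof (intro conjI ballI)
    fix p assume p: "p \<in> S1"
    then obtain q where "q \<in> T" "rel R p q" using m1 S(1) by blast
    thus "\<exists>q\<in>T1. rel R p q" using p unfolding T1_def by blast
  qed (auto simp: T1_def)
  have M2: "Mrel R S2 T2" unfolding Mrel_def
  proof (intro conjI ballI)
    fix p assume p: "p \<in> S2"
    then obtain q where "q \<in> T" "rel R p q" using m1 S(1) by blast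
    thus "\<exists>q\<in>T2. rel R p q" using p unfolding T2_def by blast
  qed (auto simp: T2_def)
  have wa: "wf_fm D R a" "wf_fm D R b" using Disj.prems(1) by auto
  have w1: "\<forall>p\<in>S1. wpair D R p" "\<forall>p\<in>S2. wpair D R p" using Disj.prems(2) S(1) by auto
  have w2: "\<forall>p\<in>T1. wpair D R p" "\<forall>p\<in>T2. wpair D R p" using Disj.prems(3) unfolding T1_def T2_def by auto
  have "sat_g D T1 a" by (rule Disj.IH(1)[OF wa(1) w1(1) w2(1) M1 S(2)])
  moreover have "sat_g D T2 b" by (rule Disj.IH(2)[OF wa(2) w1(2) w2(2) M2 S(3)])
  ultimately show ?case using TT by auto
next
  case (Cf xs a)
  have w: "wfi D R xs" using wf_Cf_wfi[OF Cf.prems(1)] .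
  show ?case
  proof (cases "consistent xs")
    case True
    have sS: "sat_g D (dop D xs ` S) a" using Cf.prems(5) True by (simp add: gteam_do_dop)
    have M: "Mrel R (dop D xs ` S) (dop D xs ` T)" unfolding Mrel_def
    proof (intro conjI ballI)
      fix p' assume "p' \<in> dop D xs ` S"
      then obtain p where p: "p \<in> S" "p' = dop D xs p" by blast
      then obtain q where q: "q \<in> T" "rel R p q" using Cf.prems(4) unfolding Mrel_def by blast
      have "rel R p' (dop D xs q)" using rel_dop[OF sig _ _ q(2) w] Cf.prems(2,3) p q by auto
      thus "\<exists>q'\<in>dop D xs ` T. rel R p' q'" using q by blast
    next
      fix q' assume "q' \<in> dop D xs ` T"
      then obtain q where q: "q \<in> T" "q' = dop D xs q" by blast
      then obtain p where p: "p \<in> S" "rel R p q" using Cf.prems(4) unfolding Mrel_def by blast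
      have "rel R (dop D xs p) q'" using rel_dop[OF sig _ _ p(2) w] Cf.prems(2,3) p q by auto
      thus "\<exists>p'\<in>dop D xs ` S. rel R p' q'" using p by blast
    qed
    have wa: "wf_fm D R a" using Cf.prems(1) by simp
    have w1: "\<forall>p\<in>dop D xs ` S. wpair D R p" using Cf.prems(2) wpair_dop[OF sig _ w] by blast
    have w2: "\<forall>p\<in>dop D xs ` T. wpair D R p" using Cf.prems(3) wpair_dop[OF sig _ w] by blast
    have "sat_g D (dop D xs ` T) a" by (rule Cf.IH[OF wa w1 w2 M sS])
    thus ?thesis by (simp add: gteam_do_dop)
  qed simp
qed

definition pts :: "('v, 'a) cteam \<Rightarrow> ('v, 'a) gteam" where
  "pts T = (\<lambda>s. (s, snd T)) ` fst T"

lemma sat_c_g: "sat_c D (A, F) \<phi> = sat_g D ((\<lambda>s. (s, F)) ` A) \<phi>"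
proof (induction \<phi> arbitrary: A F)
  case (Disj a b)
  show ?case
  proof
    assume "sat_c D (A, F) (Disj a b)"
    then obtain S1 S2 where "S1 \<subseteq> A" "S2 \<subseteq> A" "S1 \<union> S2 = A" "sat_c D (S1, F) a" "sat_c D (S2, F) b" by auto
    hence "(\<lambda>s. (s, F)) ` A = (\<lambda>s. (s, F)) ` S1 \<union> (\<lambda>s. (s, F)) ` S2"
      "sat_g D ((\<lambda>s. (s, F)) ` S1) a" "sat_g D ((\<lambda>s. (s, F)) ` S2) b" using Disj.IH by auto
    thus "sat_g D ((\<lambda>s. (s, F)) ` A) (Disj a b)" unfolding sat_g.simps by blast
  next
    assume "sat_g D ((\<lambda>s. (s, F)) ` A) (Disj a b)"
    then obtain T1 T2 where T: "(\<lambda>s. (s, F)) ` A = T1 \<union> T2" "sat_g D T1 a" "sat_g D T2 b" by auto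
    define S1 where "S1 = {s\<in>A. (s, F) \<in> T1}"
    define S2 where "S2 = {s\<in>A. (s, F) \<in> T2}"
    have T1s: "T1 \<subseteq> (\<lambda>s. (s, F)) ` A" "T2 \<subseteq> (\<lambda>s. (s, F)) ` A" using T(1) by blast+
    have "T1 = (\<lambda>s. (s, F)) ` S1" unfolding S1_def using T1s(1) by force
    moreover have "T2 = (\<lambda>s. (s, F)) ` S2" unfolding S2_def using T1s(2) by force
    moreover have "S1 \<union> S2 = A" using T(1) unfolding S1_def S2_def by auto
    ultimately have "sat_c D (S1, F) a" "sat_c D (S2, F) b" "S1 \<union> S2 = A" using Disj.IH T(2,3) by simp_all
    moreover have "S1 \<subseteq> A" "S2 \<subseteq> A" unfolding S1_def S2_def by auto
    ultimately show "sat_c D (A, F) (Disj a b)" unfolding sat_c.simps fst_conv snd_conv by blast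
  qed
next
  case (Cf xs a)
  have e: "gteam_do D xs ((\<lambda>s. (s, F)) ` A) = (\<lambda>s. (s, sys_do xs F)) ` (do_assign D xs F ` A)"
    unfolding gteam_do_def by (auto simp: image_image)
  show ?case using Cf.IH unfolding sat_c.simps sat_g.simps e team_do_def by simp
qed auto

lemma sat_c_pts: "sat_c D T \<phi> = sat_g D (pts T) \<phi>"
  unfolding pts_def using sat_c_g[of D "fst T" "snd T" \<phi>] by simp


section \<open>Profiles\<close>

definition prof :: "('v, 'a) sysf \<Rightarrow> ('v \<Rightarrow> 'a) \<Rightarrow> 'v \<Rightarrow> ('v \<Rightarrow> 'a) \<Rightarrow> 'a" where
  "prof F s V w = (if V \<in> sf_en F then sf_fn F V (restrict w (sf_pa F V)) else s V)"

lemma const_val': "wpair D R (s, F) \<Longrightarrow> V \<in> const_vars R F \<Longrightarrow> f \<in> PiE (sf_pa F V) R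
   \<Longrightarrow> sf_fn F V f = s V"
proof -
  assume p: "wpair D R (s, F)" and V: "V \<in> const_vars R F" and f: "f \<in> PiE (sf_pa F V) R"
  have VE: "V \<in> sf_en F" using V unfolding const_vars_def by auto
  have pa: "sf_pa F V \<subseteq> D" using wsysD(2)[OF wpairD(2)[OF p] VE] by blast
  have s: "s \<in> PiE D R" using wpairD(1)[OF p] .
  have "sf_fn F V f = sf_fn F V (restrict s (sf_pa F V))"
    by (rule const_fn[OF V f restrict_in[OF s pa]])
  also have "\<dots> = s V" using wpairD(3)[OF p V] by simp
  finally show ?thesis .
qed

lemma ext_lemma:
  assumes sig: "sig_ok D R" and P: "P \<subseteq> D - {V}" and Q: "Q \<subseteq> D - {V}"
    and f: "f \<in> PiE P R" and g: "g \<in> PiE Q R" and ag: "\<forall>U\<in>P \<inter> Q. f U = g U"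
  shows "\<exists>w\<in>PiE (D - {V}) R. restrict w P = f \<and> restrict w Q = g"
proof -
  define w where "w = restrict (\<lambda>U. if U \<in> P then f U else if U \<in> Q then g U else (SOME r. r \<in> R U)) (D - {V})"
  have "w \<in> PiE (D - {V}) R" unfolding w_def restrict_PiE_iff
  proof
    fix U assume U: "U \<in> D - {V}"
    show "(if U \<in> P then f U else if U \<in> Q then g U else (SOME r. r \<in> R U)) \<in> R U"
      using PiE_mem[OF f] PiE_mem[OF g] sig_ne[OF sig, of U] U by auto
  qed
  moreover have "restrict w P = f"
  proof
    fix U show "restrict w P U = f U"
      using f P unfolding w_def by (cases "U \<in> P") (auto simp: PiE_iff extensional_def)
  qed
  moreover have "restrict w Q = g"
  proof
    fix U show "restrict w Q U = g U"
      using g Q ag unfolding w_def by (cases "U \<in> Q") (auto simp: PiE_iff extensional_def)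
  qed
  ultimately show ?thesis by blast
qed

lemma prof_nc:
  assumes p: "wpair D R (s, F)" and V: "V \<notin> sf_en F - const_vars R F" and w: "w \<in> PiE (D - {V}) R"
  shows "prof F s V w = s V"
proof (cases "V \<in> sf_en F")
  case True
  hence Vc: "V \<in> const_vars R F" using V by simp
  have pa: "sf_pa F V \<subseteq> D - {V}" using wsysD(2)[OF wpairD(2)[OF p] True] .
  have "restrict w (sf_pa F V) \<in> PiE (sf_pa F V) R" using restrict_in[OF w pa] .
  thus ?thesis using const_val'[OF p Vc] True unfolding prof_def by simp
qed (simp add: prof_def)

lemma nc_transfer:
  assumes sig: "sig_ok D R" and pF: "wpair D R (s, F)" and pG: "wpair D R (s, G)"
    and H: "\<forall>V\<in>D. \<forall>w\<in>PiE (D - {V}) R. prof F s V w = prof G s V w"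
    and V: "V \<in> sf_en F - const_vars R F"
  shows "V \<in> sf_en G - const_vars R G"
proof (rule ccontr)
  assume nG: "V \<notin> sf_en G - const_vars R G"
  have VE: "V \<in> sf_en F" using V by simp
  have VD: "V \<in> D" using wsysD(1)[OF wpairD(2)[OF pF]] VE by blast
  have pa: "sf_pa F V \<subseteq> D - {V}" using wsysD(2)[OF wpairD(2)[OF pF] VE] .
  have c: "sf_fn F V f = s V" if f: "f \<in> PiE (sf_pa F V) R" for f
  proof -
    obtain w where w: "w \<in> PiE (D - {V}) R" "restrict w (sf_pa F V) = f"
      using ext_lemma[OF sig pa pa f f] by auto
    have "sf_fn F V f = prof F s V w" using VE w(2) unfolding prof_def by simp
    also have "\<dots> = prof G s V w" using H VD w(1) by blast
    also have "\<dots> = s V" using prof_nc[OF pG nG w(1)] .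
    finally show ?thesis .
  qed
  hence "V \<in> const_vars R F" using VE unfolding const_vars_def by auto
  thus False using V by simp
qed

lemma prof_char:
  assumes sig: "sig_ok D R" and pF: "wpair D R (s, F)" and pG: "wpair D R (s, G)"
  shows "sys_sim R F G \<longleftrightarrow> (\<forall>V\<in>D. \<forall>w\<in>PiE (D - {V}) R. prof F s V w = prof G s V w)"
proof
  assume sim: "sys_sim R F G"
  show "\<forall>V\<in>D. \<forall>w\<in>PiE (D - {V}) R. prof F s V w = prof G s V w"
  proof (intro ballI)
    fix V w assume VD: "V \<in> D" and w: "w \<in> PiE (D - {V}) R"
    show "prof F s V w = prof G s V w"
    proof (cases "V \<in> sf_en F - const_vars R F")
      case True
      hence UG: "V \<in> sf_en G - const_vars R G" using sim unfolding sys_sim_def by simp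
      have paF: "sf_pa F V \<subseteq> D - {V}" using wsysD(2)[OF wpairD(2)[OF pF], of V] True by blast
      have paG: "sf_pa G V \<subseteq> D - {V}" using wsysD(2)[OF wpairD(2)[OF pG], of V] UG by blast
      have "fn_sim R F G V" using sim True unfolding sys_sim_def by auto
      hence "sf_fn F V (restrict w (sf_pa F V)) = sf_fn G V (restrict w (sf_pa G V))"
        unfolding fn_sim_def using restrict_in[OF w paF] restrict_in[OF w paG] by auto
      thus ?thesis using True UG unfolding prof_def by simp
    next
      case False
      hence UG: "V \<notin> sf_en G - const_vars R G" using sim unfolding sys_sim_def by simp
      show ?thesis using prof_nc[OF pF False w] prof_nc[OF pG UG w] by simp
    qed
  qed
next
  assume H: "\<forall>V\<in>D. \<forall>w\<in>PiE (D - {V}) R. prof F s V w = prof G s V w"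
  have H': "\<forall>V\<in>D. \<forall>w\<in>PiE (D - {V}) R. prof G s V w = prof F s V w" using H by simp
  have e: "sf_en F - const_vars R F = sf_en G - const_vars R G"
    using nc_transfer[OF sig pF pG H] nc_transfer[OF sig pG pF H'] by blast
  have "fn_sim R F G V" if V: "V \<in> sf_en F - const_vars R F" for V
    unfolding fn_sim_def
  proof (intro ballI impI)
    fix f g assume f: "f \<in> PiE (sf_pa F V) R" and g: "g \<in> PiE (sf_pa G V) R"
      and ag: "\<forall>W\<in>sf_pa F V \<inter> sf_pa G V. f W = g W"
    have VG: "V \<in> sf_en G - const_vars R G" using V e by simp
    have VD: "V \<in> D" using wsysD(1)[OF wpairD(2)[OF pF]] V by blast
    have paF: "sf_pa F V \<subseteq> D - {V}" using wsysD(2)[OF wpairD(2)[OF pF], of V] V by blast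
    have paG: "sf_pa G V \<subseteq> D - {V}" using wsysD(2)[OF wpairD(2)[OF pG], of V] VG by blast
    obtain w where w: "w \<in> PiE (D - {V}) R" "restrict w (sf_pa F V) = f" "restrict w (sf_pa G V) = g"
      using ext_lemma[OF sig paF paG f g ag] by auto
    have "sf_fn F V f = prof F s V w" using V w(2) unfolding prof_def by simp
    also have "\<dots> = prof G s V w" using H VD w(1) by blast
    also have "\<dots> = sf_fn G V g" using VG w(3) unfolding prof_def by simp
    finally show "sf_fn F V f = sf_fn G V g" .
  qed
  thus "sys_sim R F G" using e unfolding sys_sim_def by blast
qed


section \<open>Formula constructions\<close>

definition enum :: "'b set \<Rightarrow> 'b list" where
  "enum A = (SOME l. distinct l \<and> set l = A)"

lemma enum: "finite A \<Longrightarrow> distinct (enum A) \<and> set (enum A) = A"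
  unfolding enum_def by (rule someI_ex) (metis finite_distinct_list)

definition ivl :: "'v set \<Rightarrow> 'v \<Rightarrow> ('v \<Rightarrow> 'a) \<Rightarrow> ('v, 'a) interv" where
  "ivl D V w = map (\<lambda>W. (W, w W)) (enum (D - {V}))"

lemma ivl_cons: "consistent (ivl D V w)"
  unfolding consistent_def ivl_def by auto

lemma ivl_ivars: "finite D \<Longrightarrow> ivars (ivl D V w) = D - {V}"
  unfolding ivars_def ivl_def using enum[of "D - {V}"] by (auto simp: image_image)

lemma ivl_map_of: "finite D \<Longrightarrow> U \<in> D - {V} \<Longrightarrow> the (map_of (ivl D V w) U) = w U"
  unfolding ivl_def using enum[of "D - {V}"] by (simp add: map_of_map_restrict)

lemma ivl_wfi: "w \<in> PiE (D - {V}) R \<Longrightarrow> finite D \<Longrightarrow> wfi D R (ivl D V w)"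
  unfolding wfi_def ivl_def using enum[of "D - {V}"] by (auto intro: PiE_mem)

lemma prof_do:
  assumes sig: "sig_ok D R" and G: "wsys D R G" and VD: "V \<in> D" and w: "w \<in> PiE (D - {V}) R"
  shows "do_assign D (ivl D V w) G s V = prof G s V w"
proof -
  have fin: "finite D" using sig unfolding sig_ok_def by simp
  let ?xs = "ivl D V w"
  have it: "\<forall>U\<in>D - {V}. (stepf ?xs G s ^^ k) (initf ?xs s) U = w U" for k
  proof (induction k)
    case 0 show ?case by (simp add: ivl_map_of[OF fin] ivl_ivars[OF fin] initf_def)
  next
    case (Suc k) show ?case by (simp add: ivl_map_of[OF fin] ivl_ivars[OF fin] stepf_def)
  qed
  define m where "m = card D - 1"
  define t where "t = (stepf ?xs G s ^^ m) (initf ?xs s)"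
  have "do_assign D ?xs G s V = stepf ?xs G s t V"
    unfolding do_assign_alt m_def t_def by (subst card_pos[OF sig]) simp
  also have "\<dots> = (if V \<in> sf_en G then sf_fn G V (restrict t (sf_pa G V)) else s V)"
    by (simp add: stepf_def ivl_ivars[OF fin])
  also have "\<dots> = prof G s V w"
  proof (cases "V \<in> sf_en G")
    case True
    have pa: "sf_pa G V \<subseteq> D - {V}" using wsysD(2)[OF G True] .
    have "restrict t (sf_pa G V) = restrict w (sf_pa G V)"
      using it[of m] pa unfolding t_def by (intro restrict_ext) auto
    thus ?thesis using True unfolding prof_def by simp
  qed (simp add: prof_def)
  finally show ?thesis .
qed

definition X0 :: "'v set \<Rightarrow> 'v" where "X0 D = (SOME X. X \<in> D)"
definition x0 :: "'v set \<Rightarrow> ('v \<Rightarrow> 'a set) \<Rightarrow> 'a" where "x0 D R = (SOME x. x \<in> R (X0 D))"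

lemma X0: "sig_ok D R \<Longrightarrow> X0 D \<in> D \<and> x0 D R \<in> R (X0 D)"
  unfolding X0_def x0_def sig_ok_def by (metis some_in_eq)

definition topf :: "'v set \<Rightarrow> ('v \<Rightarrow> 'a set) \<Rightarrow> ('v, 'a) fm" where
  "topf D R = Neg (Conj (Eq (X0 D) (x0 D R)) (Neg (Eq (X0 D) (x0 D R))))"
definition botf :: "'v set \<Rightarrow> ('v \<Rightarrow> 'a set) \<Rightarrow> ('v, 'a) fm" where
  "botf D R = Neg (topf D R)"

lemma sat_top: "sat_g D T (topf D R)"
  unfolding topf_def by simp

lemma sat_bot: "sat_g D T (botf D R) \<longleftrightarrow> T = {}"
proof -
  have "sat_g D T (botf D R) \<longleftrightarrow> (\<forall>p\<in>T. False)" unfolding botf_def topf_def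
    by (simp only: sat_g.simps) blast
  thus ?thesis by blast
qed

definition BConj where "BConj D R l = foldr Conj l (topf D R)"
definition BDisj where "BDisj D R l = foldr Disj l (botf D R)"
definition BGDisj where "BGDisj D R l = foldr GDisj l (botf D R)"

lemma sat_BConj: "sat_g D T (BConj D R l) \<longleftrightarrow> (\<forall>\<phi>\<in>set l. sat_g D T \<phi>)"
  unfolding BConj_def by (induction l) (auto simp: sat_top)

lemma sat_BGDisj: "sat_g D T (BGDisj D R l) \<longleftrightarrow> T = {} \<or> (\<exists>\<phi>\<in>set l. sat_g D T \<phi>)"
  unfolding BGDisj_def by (induction l) (auto simp: sat_bot)

definition flat :: "'v set \<Rightarrow> ('v, 'a) fm \<Rightarrow> bool" where
  "flat D \<phi> \<longleftrightarrow> (\<forall>T. sat_g D T \<phi> \<longleftrightarrow> (\<forall>p\<in>T. sat_g D {p} \<phi>))"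

lemma flatD: "flat D a \<Longrightarrow> sat_g D T a \<longleftrightarrow> (\<forall>p\<in>T. sat_g D {p} a)"
  unfolding flat_def by blast

lemma flat_Eq: "flat D (Eq X x)" unfolding flat_def by simp
lemma flat_Neg: "flat D (Neg a)" unfolding flat_def by simp
lemma flat_Conj: assumes "flat D a" "flat D b" shows "flat D (Conj a b)"
  unfolding flat_def
proof
  fix T
  show "sat_g D T (Conj a b) \<longleftrightarrow> (\<forall>p\<in>T. sat_g D {p} (Conj a b))"
    using flatD[OF assms(1), of T] flatD[OF assms(2), of T] by (simp only: sat_g.simps(4)) blast
qed
lemma flat_Cf: assumes "flat D a" shows "flat D (Cf xs a)"
  unfolding flat_def
proof
  fix T
  have "sat_g D (dop D xs ` T) a \<longleftrightarrow> (\<forall>p\<in>T. sat_g D {dop D xs p} a)"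
    using flatD[OF assms, of "dop D xs ` T"] by blast
  moreover have "sat_g D {p} (Cf xs a) \<longleftrightarrow> (\<not> consistent xs \<or> sat_g D {dop D xs p} a)" for p
    by (simp only: sat_g.simps(7) gteam_do_dop image_insert image_empty)
  ultimately show "sat_g D T (Cf xs a) \<longleftrightarrow> (\<forall>p\<in>T. sat_g D {p} (Cf xs a))"
    by (simp only: sat_g.simps(7) gteam_do_dop) blast
qed
lemma flat_top: "flat D (topf D R)" unfolding topf_def by (rule flat_Neg)
lemma flat_BConj: "\<forall>\<phi>\<in>set l. flat D \<phi> \<Longrightarrow> flat D (BConj D R l)"
proof (induction l)
  case Nil thus ?case by (simp add: BConj_def flat_top)
next
  case (Cons a l) thus ?case unfolding BConj_def by (simp add: flat_Conj)
qed

lemma sat_BDisj: "\<forall>\<phi>\<in>set l. flat D \<phi> \<Longrightarrow>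
   sat_g D T (BDisj D R l) \<longleftrightarrow> (\<forall>p\<in>T. \<exists>\<phi>\<in>set l. sat_g D {p} \<phi>)"
proof (induction l arbitrary: T)
  case Nil show ?case by (simp only: BDisj_def foldr.simps id_apply sat_bot list.set(1) bex_empty) blast
next
  case (Cons a l)
  have fa: "flat D a" using Cons.prems by simp
  have IH: "sat_g D T (BDisj D R l) \<longleftrightarrow> (\<forall>p\<in>T. \<exists>\<phi>\<in>set l. sat_g D {p} \<phi>)" for T
    using Cons by simp
  have e: "BDisj D R (a # l) = Disj a (BDisj D R l)" unfolding BDisj_def by simp
  show ?case unfolding e sat_g.simps
  proof
    assume "\<exists>T1 T2. T = T1 \<union> T2 \<and> sat_g D T1 a \<and> sat_g D T2 (BDisj D R l)"
    then obtain T1 T2 where "T = T1 \<union> T2" "sat_g D T1 a" "sat_g D T2 (BDisj D R l)" by blast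
    thus "\<forall>p\<in>T. \<exists>\<phi>\<in>set (a # l). sat_g D {p} \<phi>" using flatD[OF fa, of T1] IH[of T2] by auto
  next
    assume H: "\<forall>p\<in>T. \<exists>\<phi>\<in>set (a # l). sat_g D {p} \<phi>"
    define T1 where "T1 = {p\<in>T. sat_g D {p} a}"
    have "T = T1 \<union> (T - T1)" unfolding T1_def by auto
    moreover have "sat_g D T1 a" using flatD[OF fa, of T1] unfolding T1_def by auto
    moreover have "sat_g D (T - T1) (BDisj D R l)" using IH H unfolding T1_def by auto
    ultimately show "\<exists>T1 T2. T = T1 \<union> T2 \<and> sat_g D T1 a \<and> sat_g D T2 (BDisj D R l)" by blast
  qed
qed

definition VW :: "'v set \<Rightarrow> ('v \<Rightarrow> 'a set) \<Rightarrow> ('v \<times> ('v \<Rightarrow> 'a)) list" where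
  "VW D R = concat (map (\<lambda>V. map (\<lambda>w. (V, w)) (enum (PiE (D - {V}) R))) (enum D))"

lemma set_VW: "sig_ok D R \<Longrightarrow> set (VW D R) = Sigma D (\<lambda>V. PiE (D - {V}) R)"
proof -
  assume sig: "sig_ok D R"
  have fin: "finite D" "\<And>X. X \<in> D \<Longrightarrow> finite (R X)" using sig unfolding sig_ok_def by auto
  have "finite (PiE (D - {V}) R)" for V using fin by (intro finite_PiE) auto
  hence e2: "set (enum (PiE (D - {V}) R)) = PiE (D - {V}) R" for V using enum by blast
  have e1: "set (enum D) = D" using enum fin(1) by blast
  show ?thesis unfolding VW_def by (auto simp: e1 e2)
qed

definition stateF :: "'v set \<Rightarrow> ('v \<Rightarrow> 'a set) \<Rightarrow> ('v \<Rightarrow> 'a) \<Rightarrow> ('v, 'a) fm" where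
  "stateF D R s = BConj D R (map (\<lambda>X. Eq X (s X)) (enum D))"

definition profF :: "'v set \<Rightarrow> ('v \<Rightarrow> 'a set) \<Rightarrow> ('v \<Rightarrow> 'a) \<Rightarrow> ('v, 'a) sysf \<Rightarrow> ('v, 'a) fm" where
  "profF D R s F = BConj D R (map (\<lambda>(V, w). Cf (ivl D V w) (Eq V (prof F s V w))) (VW D R))"

definition chi :: "'v set \<Rightarrow> ('v \<Rightarrow> 'a set) \<Rightarrow> ('v \<Rightarrow> 'a) \<times> ('v, 'a) sysf \<Rightarrow> ('v, 'a) fm" where
  "chi D R p = Conj (stateF D R (fst p)) (profF D R (fst p) (snd p))"

definition piF :: "'v set \<Rightarrow> ('v \<Rightarrow> 'a set) \<Rightarrow> ('v, 'a) fm" where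
  "piF D R = Conj (BConj D R (map (\<lambda>X. Dep [] X) (enum D)))
                  (BConj D R (map (\<lambda>(V, w). Cf (ivl D V w) (Dep [] V)) (VW D R)))"

lemma flat_chi: "flat D (chi D R p)"
  unfolding chi_def stateF_def profF_def
  by (intro flat_Conj flat_BConj) (auto intro: flat_Eq flat_Cf)

lemma sat_Cf_ivl: "sat_g D T (Cf (ivl D V w) \<phi>) \<longleftrightarrow> sat_g D (dop D (ivl D V w) ` T) \<phi>"
  by (simp add: gteam_do_dop ivl_cons)

lemma sat_stateF: "sig_ok D R \<Longrightarrow> sat_g D T (stateF D R s) \<longleftrightarrow> (\<forall>q\<in>T. \<forall>X\<in>D. fst q X = s X)"
  unfolding stateF_def sat_BConj using enum[of D] unfolding sig_ok_def by auto

lemma sat_profF: assumes sig: "sig_ok D R" and T: "\<forall>q\<in>T. wpair D R q"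
  shows "sat_g D T (profF D R s F) \<longleftrightarrow>
    (\<forall>q\<in>T. \<forall>V\<in>D. \<forall>w\<in>PiE (D - {V}) R. prof (snd q) (fst q) V w = prof F s V w)"
proof -
  have L: "sat_g D T (Cf (ivl D V w) (Eq V (prof F s V w))) \<longleftrightarrow>
        (\<forall>q\<in>T. prof (snd q) (fst q) V w = prof F s V w)" if V: "V \<in> D" and w: "w \<in> PiE (D - {V}) R" for V w
  proof -
    have "do_assign D (ivl D V w) (snd q) (fst q) V = prof (snd q) (fst q) V w" if "q \<in> T" for q
      using prof_do[OF sig wpairD(2)[of D R "fst q" "snd q"] V w] T that by simp
    thus ?thesis unfolding sat_Cf_ivl by (auto simp: dop_def)
  qed
  have M: "sat_g D T (profF D R s F) \<longleftrightarrow>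
     (\<forall>V\<in>D. \<forall>w\<in>PiE (D - {V}) R. sat_g D T (Cf (ivl D V w) (Eq V (prof F s V w))))"
    unfolding profF_def sat_BConj set_map set_VW[OF sig] by (auto simp del: sat_g.simps)
  show ?thesis unfolding M
  proof (intro iffI ballI)
    fix q V w assume "\<forall>V\<in>D. \<forall>w\<in>PiE (D - {V}) R. sat_g D T (Cf (ivl D V w) (Eq V (prof F s V w)))"
      "q \<in> T" "V \<in> D" "w \<in> PiE (D - {V}) R"
    thus "prof (snd q) (fst q) V w = prof F s V w" using L by blast
  next
    fix V w assume "\<forall>q\<in>T. \<forall>V\<in>D. \<forall>w\<in>PiE (D - {V}) R. prof (snd q) (fst q) V w = prof F s V w"
      "V \<in> D" "w \<in> PiE (D - {V}) R"
    thus "sat_g D T (Cf (ivl D V w) (Eq V (prof F s V w)))" using L by blast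
  qed
qed

lemma PiE_eqI: "s \<in> PiE D R \<Longrightarrow> t \<in> PiE D R \<Longrightarrow> (\<forall>X\<in>D. s X = t X) \<Longrightarrow> s = t"
  using PiE_ext by metis

lemma sat_chi: fixes D :: "'v set" and R :: "'v \<Rightarrow> 'a set" assumes sig: "sig_ok D R" and T: "\<forall>q\<in>T. wpair D R q" and p: "wpair D R p"
  shows "sat_g D T (chi D R p) \<longleftrightarrow> (\<forall>q\<in>T. rel R q p)"
proof -
  obtain s F where pe: "p = (s, F)" by (cases p)
  define A where "A q = (\<forall>X\<in>D. fst q X = s X)" for q :: "('v \<Rightarrow> 'a) \<times> ('v, 'a) sysf"
  define B where "B q = (\<forall>V\<in>D. \<forall>w\<in>PiE (D - {V}) R. prof (snd q) (fst q) V w = prof F s V w)" for q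
  have AB: "A q \<and> B q \<longleftrightarrow> rel R q p" if q: "q \<in> T" for q
  proof -
    obtain s' G where qe: "q = (s', G)" by (cases q)
    have wq: "wpair D R (s', G)" using T q qe by simp
    have wp: "wpair D R (s, F)" using p pe by simp
    show ?thesis
    proof
      assume H: "A q \<and> B q"
      have "\<forall>X\<in>D. s' X = s X" using H qe unfolding A_def by simp
      hence ss: "s' = s" using PiE_eqI[OF wpairD(1)[OF wq] wpairD(1)[OF wp]] by blast
      have "\<forall>V\<in>D. \<forall>w\<in>PiE (D - {V}) R. prof G s V w = prof F s V w" using H qe ss unfolding B_def by simp
      hence "sys_sim R G F" using prof_char[OF sig wq[unfolded ss] wp] by blast
      thus "rel R q p" using ss qe pe unfolding rel_def by simp
    next
      assume r: "rel R q p"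
      hence ss: "s' = s" and sim: "sys_sim R G F" using qe pe unfolding rel_def by auto
      have "\<forall>V\<in>D. \<forall>w\<in>PiE (D - {V}) R. prof G s V w = prof F s V w"
        using prof_char[OF sig wq[unfolded ss] wp] sim by blast
      thus "A q \<and> B q" using ss qe unfolding A_def B_def by simp
    qed
  qed
  have "sat_g D T (chi D R p) \<longleftrightarrow> (\<forall>q\<in>T. A q) \<and> (\<forall>q\<in>T. B q)"
    unfolding chi_def sat_g.simps(4) sat_stateF[OF sig] sat_profF[OF sig T] pe A_def B_def by simp
  also have "\<dots> \<longleftrightarrow> (\<forall>q\<in>T. rel R q p)" using AB by blast
  finally show ?thesis .
qed

lemma sat_Dep_nil: "sat_g D T (Dep [] X) \<longleftrightarrow> (\<forall>p\<in>T. \<forall>p'\<in>T. fst p X = fst p' X)"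
  by (simp only: sat_g.simps(2) list.map(1) simp_thms)

lemma sat_piF: fixes D :: "'v set" and R :: "'v \<Rightarrow> 'a set"
  assumes sig: "sig_ok D R" and T: "\<forall>q\<in>T. wpair D R q"
  shows "sat_g D T (piF D R) \<longleftrightarrow> (\<forall>q\<in>T. \<forall>q'\<in>T. rel R q q')"
proof -
  have fin: "finite D" using sig unfolding sig_ok_def by simp
  define A where "A q q' = (\<forall>X\<in>D. fst q X = fst q' X)" for q q' :: "('v \<Rightarrow> 'a) \<times> ('v, 'a) sysf"
  define B where "B q q' = (\<forall>V\<in>D. \<forall>w\<in>PiE (D - {V}) R. prof (snd q) (fst q) V w = prof (snd q') (fst q') V w)"
    for q q' :: "('v \<Rightarrow> 'a) \<times> ('v, 'a) sysf"
  have a: "sat_g D T (BConj D R (map (\<lambda>X. Dep [] X) (enum D))) \<longleftrightarrow> (\<forall>q\<in>T. \<forall>q'\<in>T. A q q')"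
  proof -
    have e: "set (map (\<lambda>X. Dep [] X) (enum D)) = (\<lambda>X. Dep [] X) ` D" using enum[OF fin] by simp
    show ?thesis unfolding sat_BConj A_def e Ball_image_comp comp_def sat_Dep_nil
    proof (intro iffI ballI)
      fix q q' X assume H: "\<forall>X\<in>D. \<forall>p\<in>T. \<forall>p'\<in>T. fst p X = fst p' X" and q: "q \<in> T" "q' \<in> T" "X \<in> D"
      show "fst q X = fst q' X" using H[rule_format, OF q(3) q(1) q(2)] .
    next
      fix X p p' assume H: "\<forall>q\<in>T. \<forall>q'\<in>T. \<forall>X\<in>D. fst q X = fst q' X" and q: "X \<in> D" "p \<in> T" "p' \<in> T"
      show "fst p X = fst p' X" using H[rule_format, OF q(2) q(3) q(1)] .
    qed
  qed
  have L: "sat_g D T (Cf (ivl D V w) (Dep [] V)) \<longleftrightarrow>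
        (\<forall>q\<in>T. \<forall>q'\<in>T. prof (snd q) (fst q) V w = prof (snd q') (fst q') V w)"
    if V: "V \<in> D" and w: "w \<in> PiE (D - {V}) R" for V w
  proof -
    have "do_assign D (ivl D V w) (snd q) (fst q) V = prof (snd q) (fst q) V w" if "q \<in> T" for q
      using prof_do[OF sig wpairD(2)[of D R "fst q" "snd q"] V w] T that by simp
    thus ?thesis unfolding sat_Cf_ivl sat_Dep_nil by (auto simp: dop_def)
  qed
  have M: "sat_g D T (BConj D R (map (\<lambda>(V, w). Cf (ivl D V w) (Dep [] V)) (VW D R))) \<longleftrightarrow>
     (\<forall>V\<in>D. \<forall>w\<in>PiE (D - {V}) R. sat_g D T (Cf (ivl D V w) (Dep [] V)))"
    unfolding sat_BConj set_map set_VW[OF sig] by (auto simp del: sat_g.simps)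
  have b: "sat_g D T (BConj D R (map (\<lambda>(V, w). Cf (ivl D V w) (Dep [] V)) (VW D R))) \<longleftrightarrow>
     (\<forall>q\<in>T. \<forall>q'\<in>T. B q q')"
    unfolding M B_def
  proof (intro iffI ballI)
    fix q q' V w assume H: "\<forall>V\<in>D. \<forall>w\<in>PiE (D - {V}) R. sat_g D T (Cf (ivl D V w) (Dep [] V))"
      and q: "q \<in> T" "q' \<in> T" and V: "V \<in> D" and w: "w \<in> PiE (D - {V}) R"
    have "sat_g D T (Cf (ivl D V w) (Dep [] V))" using H V w by blast
    hence "\<forall>q\<in>T. \<forall>q'\<in>T. prof (snd q) (fst q) V w = prof (snd q') (fst q') V w" using L[OF V w] by blast
    thus "prof (snd q) (fst q) V w = prof (snd q') (fst q') V w" using q by blast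
  next
    fix V w assume H: "\<forall>q\<in>T. \<forall>q'\<in>T. \<forall>V\<in>D. \<forall>w\<in>PiE (D - {V}) R. prof (snd q) (fst q) V w = prof (snd q') (fst q') V w"
      and V: "V \<in> D" and w: "w \<in> PiE (D - {V}) R"
    have "\<forall>q\<in>T. \<forall>q'\<in>T. prof (snd q) (fst q) V w = prof (snd q') (fst q') V w" using H V w by blast
    thus "sat_g D T (Cf (ivl D V w) (Dep [] V))" using L[OF V w] by blast
  qed
  have c: "A q q' \<and> B q q' \<longleftrightarrow> rel R q q'" if q: "q \<in> T" "q' \<in> T" for q q'
  proof -
    obtain s G where qe: "q = (s, G)" by (cases q)
    obtain s' G' where qe': "q' = (s', G')" by (cases q')
    have wq: "wpair D R (s, G)" "wpair D R (s', G')" using T q qe qe' by auto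
    show ?thesis
    proof
      assume H: "A q q' \<and> B q q'"
      have "\<forall>X\<in>D. s X = s' X" using H qe qe' unfolding A_def by simp
      hence ss: "s = s'" using PiE_eqI[OF wpairD(1)[OF wq(1)] wpairD(1)[OF wq(2)]] by blast
      have "\<forall>V\<in>D. \<forall>w\<in>PiE (D - {V}) R. prof G s V w = prof G' s V w" using H qe qe' ss unfolding B_def by simp
      hence "sys_sim R G G'" using prof_char[OF sig wq(1) wq(2)[folded ss]] by blast
      thus "rel R q q'" using ss qe qe' unfolding rel_def by simp
    next
      assume r: "rel R q q'"
      hence ss: "s = s'" and sim: "sys_sim R G G'" using qe qe' unfolding rel_def by auto
      have "\<forall>V\<in>D. \<forall>w\<in>PiE (D - {V}) R. prof G s V w = prof G' s V w"
        using prof_char[OF sig wq(1) wq(2)[folded ss]] sim by blast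
      thus "A q q' \<and> B q q'" using ss qe qe' unfolding A_def B_def by simp
    qed
  qed
  have "sat_g D T (piF D R) \<longleftrightarrow> (\<forall>q\<in>T. \<forall>q'\<in>T. A q q') \<and> (\<forall>q\<in>T. \<forall>q'\<in>T. B q q')"
    unfolding piF_def sat_g.simps(4) a b by (rule refl)
  also have "\<dots> \<longleftrightarrow> (\<forall>q\<in>T. \<forall>q'\<in>T. rel R q q')" using c by blast
  finally show ?thesis .
qed


section \<open>Finiteness\<close>

lemma sysf_eq: "F = (G::('v,'a) sysf) \<longleftrightarrow> sf_en F = sf_en G \<and> sf_pa F = sf_pa G \<and> sf_fn F = sf_fn G"
  by (auto intro: sysf.equality)

lemma finite_systems: fixes D :: "'v set" and R :: "'v \<Rightarrow> 'a set"
  assumes sig: "sig_ok D R" shows "finite (systems D R)"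
proof -
  have fD: "finite D" and fR: "\<And>X. X \<in> D \<Longrightarrow> finite (R X)" using sig unfolding sig_ok_def by auto
  define h where "h F = (sf_en F, restrict (sf_pa F) D, restrict (sf_fn F) D)" for F :: "('v, 'a) sysf"
  define B where "B = Pow D \<times> PiE D (\<lambda>_. Pow D) \<times>
     PiE D (\<lambda>V. insert (\<lambda>_. undefined) (\<Union>P\<in>Pow D. PiE (PiE P R) (\<lambda>_. R V)))"
  have inj: "inj_on h (systems D R)"
  proof
    fix F G assume F: "F \<in> systems D R" and G: "G \<in> systems D R" and e: "h F = h G"
    have en: "sf_en F = sf_en G" using e unfolding h_def by simp
    have EF: "sf_en F \<subseteq> D" "\<forall>V. V \<notin> sf_en F \<longrightarrow> sf_pa F V = {} \<and> sf_fn F V = (\<lambda>_. undefined)"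
      using F unfolding systems_def by auto
    have EG: "sf_en G \<subseteq> D" "\<forall>V. V \<notin> sf_en G \<longrightarrow> sf_pa G V = {} \<and> sf_fn G V = (\<lambda>_. undefined)"
      using G unfolding systems_def by auto
    have "sf_pa F = sf_pa G"
    proof
      fix V show "sf_pa F V = sf_pa G V"
      proof (cases "V \<in> D")
        case True
        have "restrict (sf_pa F) D = restrict (sf_pa G) D" using e unfolding h_def by simp
        hence "restrict (sf_pa F) D V = restrict (sf_pa G) D V" by simp
        thus ?thesis using True by simp
      next
        case False
        hence "V \<notin> sf_en F" "V \<notin> sf_en G" using EF(1) EG(1) by auto
        thus ?thesis using EF(2) EG(2) by simp
      qed
    qed
    moreover have "sf_fn F = sf_fn G"
    proof
      fix V show "sf_fn F V = sf_fn G V"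
      proof (cases "V \<in> D")
        case True
        have "restrict (sf_fn F) D = restrict (sf_fn G) D" using e unfolding h_def by simp
        hence "restrict (sf_fn F) D V = restrict (sf_fn G) D V" by simp
        thus ?thesis using True by simp
      next
        case False
        hence "V \<notin> sf_en F" "V \<notin> sf_en G" using EF(1) EG(1) by auto
        thus ?thesis using EF(2) EG(2) by simp
      qed
    qed
    ultimately show "F = G" using en sysf_eq by blast
  qed
  have sub: "h ` systems D R \<subseteq> B"
  proof
    fix y assume "y \<in> h ` systems D R"
    then obtain F where F: "F \<in> systems D R" and y: "y = h F" by blast
    have S: "sf_en F \<subseteq> D" "\<forall>V. V \<notin> sf_en F \<longrightarrow> sf_pa F V = {} \<and> sf_fn F V = (\<lambda>_. undefined)"
      "\<forall>V\<in>sf_en F. sf_pa F V \<subseteq> D - {V} \<and> sf_fn F V \<in> PiE (PiE (sf_pa F V) R) (\<lambda>_. R V)"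
      using F unfolding systems_def by auto
    have "restrict (sf_pa F) D \<in> PiE D (\<lambda>_. Pow D)"
      unfolding restrict_PiE_iff using S by (metis Diff_subset Pow_iff empty_subsetI order_trans)
    moreover have "restrict (sf_fn F) D \<in> PiE D (\<lambda>V. insert (\<lambda>_. undefined) (\<Union>P\<in>Pow D. PiE (PiE P R) (\<lambda>_. R V)))"
      unfolding restrict_PiE_iff
    proof
      fix V assume V: "V \<in> D"
      show "sf_fn F V \<in> insert (\<lambda>_. undefined) (\<Union>P\<in>Pow D. PiE (PiE P R) (\<lambda>_. R V))"
      proof (cases "V \<in> sf_en F")
        case True
        hence "sf_pa F V \<in> Pow D" "sf_fn F V \<in> PiE (PiE (sf_pa F V) R) (\<lambda>_. R V)" using S(3) by auto
        thus ?thesis by blast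
      next
        case False thus ?thesis using S(2) by simp
      qed
    qed
    ultimately show "y \<in> B" unfolding y h_def B_def using S(1) by simp
  qed
  have "finite B" unfolding B_def
  proof (intro finite_cartesian_product finite_PiE)
    show "finite (Pow D)" using fD by simp
    show "finite D" by (rule fD)
    fix V assume V: "V \<in> D"
    show "finite (insert (\<lambda>_. undefined) (\<Union>P\<in>Pow D. PiE (PiE P R) (\<lambda>_. R V)))"
    proof (intro finite_insert[THEN iffD2] finite_UN_I finite_PiE)
      show "finite (Pow D)" using fD by simp
      fix P assume P: "P \<in> Pow D"
      show "finite P" using P fD by (auto intro: finite_subset)
      show "\<And>i. i \<in> P \<Longrightarrow> finite (R i)" using P fR by auto
      show "\<And>i. i \<in> PiE P R \<Longrightarrow> finite (R V)" using fR V by auto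
    qed
  qed (use fD in auto)
  hence "finite (h ` systems D R)" using sub finite_subset by blast
  thus ?thesis using inj finite_imageD by blast
qed

lemma finite_assigns: "sig_ok D R \<Longrightarrow> finite (PiE D R)"
  unfolding sig_ok_def by (intro finite_PiE) auto

lemma finite_compat: "sig_ok D R \<Longrightarrow> finite (compat_pairs D R)"
proof -
  assume sig: "sig_ok D R"
  have "compat_pairs D R \<subseteq> PiE D R \<times> systems D R" unfolding compat_pairs_def assigns_def by auto
  thus ?thesis using finite_assigns[OF sig] finite_systems[OF sig] finite_subset by blast
qed

lemma finite_causal: "sig_ok D R \<Longrightarrow> finite (causal_teams D R)"
proof -
  assume sig: "sig_ok D R"
  have "causal_teams D R \<subseteq> Pow (PiE D R) \<times> systems D R" unfolding causal_teams_def assigns_def by auto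
  thus ?thesis using finite_assigns[OF sig] finite_systems[OF sig] finite_subset by blast
qed


lemma CO_sub: "is_CO \<phi> \<Longrightarrow> is_COsq \<phi> \<and> is_COD \<phi>"
  by (induction \<phi>) auto

lemma CO_top: "is_CO (topf D R)" unfolding topf_def by simp
lemma CO_bot: "is_CO (botf D R)" unfolding botf_def topf_def by simp

lemma CO_BConj: "\<forall>\<phi>\<in>set l. is_CO \<phi> \<Longrightarrow> is_CO (BConj D R l)"
  unfolding BConj_def by (induction l) (auto simp: CO_top)
lemma CO_BDisj: "\<forall>\<phi>\<in>set l. is_CO \<phi> \<Longrightarrow> is_CO (BDisj D R l)"
  unfolding BDisj_def by (induction l) (auto simp: CO_bot)
lemma COsq_BGDisj: "\<forall>\<phi>\<in>set l. is_COsq \<phi> \<Longrightarrow> is_COsq (BGDisj D R l)"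
  unfolding BGDisj_def by (induction l) (auto simp: CO_bot CO_sub)
lemma COD_BConj: "\<forall>\<phi>\<in>set l. is_COD \<phi> \<Longrightarrow> is_COD (BConj D R l)"
  unfolding BConj_def by (induction l) (auto simp: CO_top CO_sub)
lemma COD_BDisj: "\<forall>\<phi>\<in>set l. is_COD \<phi> \<Longrightarrow> is_COD (BDisj D R l)"
  unfolding BDisj_def by (induction l) (auto simp: CO_bot CO_sub)

lemma CO_chi: "is_CO (chi D R p)"
  unfolding chi_def stateF_def profF_def by (auto intro!: CO_BConj)

lemma COD_piF: "is_COD (piF D R)"
  unfolding piF_def by (auto intro!: COD_BConj)

lemma wf_top: "sig_ok D R \<Longrightarrow> wf_fm D R (topf D R)" unfolding topf_def using X0 by simp
lemma wf_bot: "sig_ok D R \<Longrightarrow> wf_fm D R (botf D R)" unfolding botf_def using wf_top by simp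

lemma wf_BConj: "sig_ok D R \<Longrightarrow> \<forall>\<phi>\<in>set l. wf_fm D R \<phi> \<Longrightarrow> wf_fm D R (BConj D R l)"
  unfolding BConj_def by (induction l) (auto simp: wf_top)
lemma wf_BDisj: "sig_ok D R \<Longrightarrow> \<forall>\<phi>\<in>set l. wf_fm D R \<phi> \<Longrightarrow> wf_fm D R (BDisj D R l)"
  unfolding BDisj_def by (induction l) (auto simp: wf_bot)
lemma wf_BGDisj: "sig_ok D R \<Longrightarrow> \<forall>\<phi>\<in>set l. wf_fm D R \<phi> \<Longrightarrow> wf_fm D R (BGDisj D R l)"
  unfolding BGDisj_def by (induction l) (auto simp: wf_bot)

lemma wf_Cf_ivl: "sig_ok D R \<Longrightarrow> w \<in> PiE (D - {V}) R \<Longrightarrow> (\<forall>(X, x)\<in>set (ivl D V w). X \<in> D \<and> x \<in> R X)"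
  using ivl_wfi[of w D V R] unfolding wfi_def sig_ok_def by simp

lemma prof_in: "wsys D R F \<Longrightarrow> s \<in> PiE D R \<Longrightarrow> V \<in> D \<Longrightarrow> w \<in> PiE (D - {V}) R
   \<Longrightarrow> prof F s V w \<in> R V"
proof -
  assume F: "wsys D R F" and s: "s \<in> PiE D R" and V: "V \<in> D" and w: "w \<in> PiE (D - {V}) R"
  show ?thesis
  proof (cases "V \<in> sf_en F")
    case True
    have "restrict w (sf_pa F V) \<in> PiE (sf_pa F V) R" using restrict_in[OF w wsysD(2)[OF F True]] .
    thus ?thesis using wsysD(3)[OF F True] True unfolding prof_def by simp
  qed (use s V in \<open>simp add: prof_def PiE_mem\<close>)
qed

lemma wf_chi: assumes sig: "sig_ok D R" and p: "wpair D R p" shows "wf_fm D R (chi D R p)"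
proof -
  obtain s F where pe: "p = (s, F)" by (cases p)
  have s: "s \<in> PiE D R" and F: "wsys D R F" using wpairD[of D R s F] p pe by auto
  have fin: "finite D" using sig unfolding sig_ok_def by simp
  have "wf_fm D R (stateF D R s)" unfolding stateF_def
    using enum[OF fin] s by (intro wf_BConj[OF sig]) (auto intro: PiE_mem)
  moreover have "wf_fm D R (profF D R s F)" unfolding profF_def
  proof (intro wf_BConj[OF sig] ballI)
    fix \<phi> assume "\<phi> \<in> set (map (\<lambda>(V, w). Cf (ivl D V w) (Eq V (prof F s V w))) (VW D R))"
    then obtain V w where Vw: "V \<in> D" "w \<in> PiE (D - {V}) R" and e: "\<phi> = Cf (ivl D V w) (Eq V (prof F s V w))"
      using set_VW[OF sig] by auto
    show "wf_fm D R \<phi>" unfolding e using wf_Cf_ivl[OF sig Vw(2)] prof_in[OF F s Vw] Vw(1) by simp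
  qed
  ultimately show ?thesis unfolding chi_def pe by simp
qed

lemma wf_piF: assumes sig: "sig_ok D R" shows "wf_fm D R (piF D R)"
proof -
  have fin: "finite D" using sig unfolding sig_ok_def by simp
  have "wf_fm D R (BConj D R (map (\<lambda>X. Dep [] X) (enum D)))"
    using enum[OF fin] by (intro wf_BConj[OF sig]) auto
  moreover have "wf_fm D R (BConj D R (map (\<lambda>(V, w). Cf (ivl D V w) (Dep [] V)) (VW D R)))"
  proof (intro wf_BConj[OF sig] ballI)
    fix \<phi> assume "\<phi> \<in> set (map (\<lambda>(V, w). Cf (ivl D V w) (Dep [] V)) (VW D R))"
    then obtain V w where Vw: "V \<in> D" "w \<in> PiE (D - {V}) R" and e: "\<phi> = Cf (ivl D V w) (Dep [] V)"
      using set_VW[OF sig] by auto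
    show "wf_fm D R \<phi>" unfolding e using wf_Cf_ivl[OF sig Vw(2)] Vw(1) by simp
  qed
  ultimately show ?thesis unfolding piF_def by simp
qed


section \<open>Non-inclusion formula\<close>

lemma sat_rep:
  assumes sig: "sig_ok D R"
  shows "\<forall>q\<in>Y. wpair D R q \<Longrightarrow> sat_g D Y (BDisj D R (replicate n (piF D R))) \<longleftrightarrow>
     (\<exists>f. (\<forall>q\<in>Y. f q < n) \<and> (\<forall>q\<in>Y. \<forall>q'\<in>Y. f q = f q' \<longrightarrow> rel R q q'))"
proof (induction n arbitrary: Y)
  case 0
  have "sat_g D Y (BDisj D R (replicate 0 (piF D R))) \<longleftrightarrow> Y = {}"
    unfolding BDisj_def by (simp add: sat_bot)
  thus ?case by auto
next
  case (Suc n)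
  have e: "BDisj D R (replicate (Suc n) (piF D R)) = Disj (piF D R) (BDisj D R (replicate n (piF D R)))"
    unfolding BDisj_def by simp
  show ?case unfolding e sat_g.simps(5)
  proof
    assume "\<exists>T1 T2. Y = T1 \<union> T2 \<and> sat_g D T1 (piF D R) \<and> sat_g D T2 (BDisj D R (replicate n (piF D R)))"
    then obtain T1 T2 where T: "Y = T1 \<union> T2" "sat_g D T1 (piF D R)" "sat_g D T2 (BDisj D R (replicate n (piF D R)))"
      by blast
    have u: "\<forall>q\<in>T1. \<forall>q'\<in>T1. rel R q q'" using T(2) sat_piF[OF sig, of T1] Suc.prems T(1) by auto
    obtain f where f: "\<forall>q\<in>T2. f q < n" "\<forall>q\<in>T2. \<forall>q'\<in>T2. f q = f q' \<longrightarrow> rel R q q'"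
      using Suc.IH[of T2] Suc.prems T(1,3) by auto
    define g where "g q = (if q \<in> T2 then f q else n)" for q
    have "\<forall>q\<in>Y. g q < Suc n" using f(1) unfolding g_def by auto
    moreover have "\<forall>q\<in>Y. \<forall>q'\<in>Y. g q = g q' \<longrightarrow> rel R q q'"
    proof (intro ballI impI)
      fix q q' assume q: "q \<in> Y" "q' \<in> Y" and gq: "g q = g q'"
      show "rel R q q'"
      proof (cases "q \<in> T2")
        case True
        show ?thesis
        proof (cases "q' \<in> T2")
          case True2: True thus ?thesis using True gq f(2) unfolding g_def by auto
        next
          case False thus ?thesis using True gq f(1) unfolding g_def by auto
        qed
      next
        case False
        show ?thesis
        proof (cases "q' \<in> T2")
          case True thus ?thesis using False gq f(1) unfolding g_def by fastforce
        next
          case False2: False thus ?thesis using False q u T(1) by blast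
        qed
      qed
    qed
    ultimately show "\<exists>f. (\<forall>q\<in>Y. f q < Suc n) \<and> (\<forall>q\<in>Y. \<forall>q'\<in>Y. f q = f q' \<longrightarrow> rel R q q')" by blast
  next
    assume "\<exists>f. (\<forall>q\<in>Y. f q < Suc n) \<and> (\<forall>q\<in>Y. \<forall>q'\<in>Y. f q = f q' \<longrightarrow> rel R q q')"
    then obtain f where f: "\<forall>q\<in>Y. f q < Suc n" "\<forall>q\<in>Y. \<forall>q'\<in>Y. f q = f q' \<longrightarrow> rel R q q'" by blast
    define T1 where "T1 = {q\<in>Y. f q = n}"
    define T2 where "T2 = {q\<in>Y. f q \<noteq> n}"
    have "Y = T1 \<union> T2" unfolding T1_def T2_def by auto
    moreover have "sat_g D T1 (piF D R)" using sat_piF[OF sig, of T1] Suc.prems f(2) unfolding T1_def by auto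
    moreover have "sat_g D T2 (BDisj D R (replicate n (piF D R)))"
    proof -
      have "\<forall>q\<in>T2. f q < n" using f(1) unfolding T2_def by fastforce
      moreover have "\<forall>q\<in>T2. \<forall>q'\<in>T2. f q = f q' \<longrightarrow> rel R q q'" using f(2) unfolding T2_def by auto
      ultimately show ?thesis using Suc.IH[of T2] Suc.prems unfolding T2_def by auto
    qed
    ultimately show "\<exists>T1 T2. Y = T1 \<union> T2 \<and> sat_g D T1 (piF D R) \<and> sat_g D T2 (BDisj D R (replicate n (piF D R)))"
      by blast
  qed
qed

definition notX :: "'v set \<Rightarrow> ('v \<Rightarrow> 'a set) \<Rightarrow> ('v, 'a) gteam \<Rightarrow> ('v, 'a) fm" where
  "notX D R X = BDisj D R (map (chi D R) (filter (\<lambda>p. \<not> (\<exists>p'\<in>X. rel R p p')) (enum (compat_pairs D R))))"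

lemma sat_notX:
  assumes sig: "sig_ok D R" and Y: "Y \<subseteq> compat_pairs D R" and X: "X \<subseteq> compat_pairs D R"
  shows "sat_g D Y (notX D R X) \<longleftrightarrow> (\<forall>q\<in>Y. \<not> (\<exists>p'\<in>X. rel R q p'))"
proof -
  have fin: "finite (compat_pairs D R)" using finite_compat[OF sig] .
  have se: "set (filter (\<lambda>p. \<not> (\<exists>p'\<in>X. rel R p p')) (enum (compat_pairs D R)))
     = {p\<in>compat_pairs D R. \<not> (\<exists>p'\<in>X. rel R p p')}" using enum[OF fin] by auto
  have fl: "\<forall>\<phi>\<in>set (map (chi D R) (filter (\<lambda>p. \<not> (\<exists>p'\<in>X. rel R p p')) (enum (compat_pairs D R)))). flat D \<phi>"
    using flat_chi by auto
  have "(\<exists>\<phi>\<in>set (map (chi D R) (filter (\<lambda>p. \<not> (\<exists>p'\<in>X. rel R p p')) (enum (compat_pairs D R)))). sat_g D {q} \<phi>)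
      \<longleftrightarrow> \<not> (\<exists>p'\<in>X. rel R q p')" if q: "q \<in> Y" for q
  proof -
    have wq: "wpair D R q" using q Y compat_wpair by blast
    have "(\<exists>\<phi>\<in>set (map (chi D R) (filter (\<lambda>p. \<not> (\<exists>p'\<in>X. rel R p p')) (enum (compat_pairs D R)))). sat_g D {q} \<phi>)
      \<longleftrightarrow> (\<exists>p\<in>compat_pairs D R. \<not> (\<exists>p'\<in>X. rel R p p') \<and> rel R q p)"
    proof -
      have L: "sat_g D {q} (chi D R p) \<longleftrightarrow> rel R q p" if "p \<in> compat_pairs D R" for p
        using sat_chi[OF sig, of "{q}" p] wq compat_wpair[OF that] by simp
      have "(\<exists>\<phi>\<in>chi D R ` {p\<in>compat_pairs D R. \<not> (\<exists>p'\<in>X. rel R p p')}. sat_g D {q} \<phi>)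
        \<longleftrightarrow> (\<exists>p\<in>{p\<in>compat_pairs D R. \<not> (\<exists>p'\<in>X. rel R p p')}. sat_g D {q} (chi D R p))" by blast
      also have "\<dots> \<longleftrightarrow> (\<exists>p\<in>compat_pairs D R. \<not> (\<exists>p'\<in>X. rel R p p') \<and> rel R q p)" using L by blast
      finally show ?thesis unfolding set_map se .
    qed
    also have "\<dots> \<longleftrightarrow> \<not> (\<exists>p'\<in>X. rel R q p')"
    proof
      assume "\<exists>p\<in>compat_pairs D R. \<not> (\<exists>p'\<in>X. rel R p p') \<and> rel R q p"
      then obtain p where p: "p \<in> compat_pairs D R" "\<not> (\<exists>p'\<in>X. rel R p p')" "rel R q p" by blast
      show "\<not> (\<exists>p'\<in>X. rel R q p')"
      proof
        assume "\<exists>p'\<in>X. rel R q p'"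
        then obtain p' where p': "p' \<in> X" "rel R q p'" by blast
        have "rel R p p'" using rel_trans[OF sig compat_wpair[OF p(1)] wq compat_wpair, of p']
          rel_sym[OF p(3)] p'(2) p'(1) X by blast
        thus False using p(2) p'(1) by blast
      qed
    next
      assume "\<not> (\<exists>p'\<in>X. rel R q p')"
      thus "\<exists>p\<in>compat_pairs D R. \<not> (\<exists>p'\<in>X. rel R p p') \<and> rel R q p" using q Y rel_refl by blast
    qed
    finally show ?thesis .
  qed
  thus ?thesis unfolding notX_def sat_BDisj[OF fl] by blast
qed

definition NX :: "'v set \<Rightarrow> ('v \<Rightarrow> 'a set) \<Rightarrow> ('v, 'a) gteam \<Rightarrow> ('v, 'a) fm" where
  "NX D R X = Disj (BDisj D R (replicate (card X - 1) (piF D R))) (notX D R X)"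

lemma NX_sem:
  assumes sig: "sig_ok D R" and Y: "Y \<subseteq> compat_pairs D R" and X: "X \<subseteq> compat_pairs D R"
    and Xne: "X \<noteq> {}" and red: "\<forall>p\<in>X. \<forall>p'\<in>X. rel R p p' \<longrightarrow> p = p'"
  shows "sat_g D Y (NX D R X) \<longleftrightarrow> \<not> (\<forall>p\<in>X. \<exists>q\<in>Y. rel R p q)"
proof -
  have finX: "finite X" using finite_compat[OF sig] X finite_subset by blast
  have wX: "\<forall>p\<in>X. wpair D R p" using X compat_wpair by blast
  have wY: "\<forall>p\<in>Y. wpair D R p" using Y compat_wpair by blast
  show ?thesis
  proof
    assume "sat_g D Y (NX D R X)"
    then obtain Y1 Y2 where Ys: "Y = Y1 \<union> Y2" "sat_g D Y1 (BDisj D R (replicate (card X - 1) (piF D R)))"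
      "sat_g D Y2 (notX D R X)" unfolding NX_def by auto
    obtain f where f: "\<forall>q\<in>Y1. f q < card X - 1" "\<forall>q\<in>Y1. \<forall>q'\<in>Y1. f q = f q' \<longrightarrow> rel R q q'"
      using sat_rep[OF sig, of Y1] Ys(1,2) wY by auto
    have n2: "\<forall>q\<in>Y2. \<not> (\<exists>p'\<in>X. rel R q p')" using sat_notX[OF sig _ X, of Y2] Ys(1,3) Y by auto
    show "\<not> (\<forall>p\<in>X. \<exists>q\<in>Y. rel R p q)"
    proof
      assume all: "\<forall>p\<in>X. \<exists>q\<in>Y. rel R p q"
      define g where "g p = (SOME q. q \<in> Y \<and> rel R p q)" for p
      have g: "g p \<in> Y \<and> rel R p (g p)" if "p \<in> X" for p
        unfolding g_def using all that by (metis (mono_tags, lifting) someI_ex)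
      have g1: "g p \<in> Y1" if "p \<in> X" for p
      proof -
        have "g p \<notin> Y2" using n2 g[OF that] rel_sym that by blast
        thus ?thesis using g[OF that] Ys(1) by blast
      qed
      have "inj_on (f \<circ> g) X"
      proof
        fix p p' assume p: "p \<in> X" "p' \<in> X" and e: "(f \<circ> g) p = (f \<circ> g) p'"
        have "rel R (g p) (g p')" using f(2) g1[OF p(1)] g1[OF p(2)] e by simp
        have wg: "wpair D R (g p)" "wpair D R (g p')" using g[OF p(1)] g[OF p(2)] wY by auto
        have wp: "wpair D R p" "wpair D R p'" using wX p by auto
        have "rel R p (g p')" by (rule rel_trans[OF sig wp(1) wg(1) wg(2) _ \<open>rel R (g p) (g p')\<close>]) (use g[OF p(1)] in blast)
        hence "rel R p p'" by (rule rel_trans[OF sig wp(1) wg(2) wp(2) _ rel_sym]) (use g[OF p(2)] in blast)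
        thus "p = p'" using red p by blast
      qed
      moreover have "(f \<circ> g) ` X \<subseteq> {..<card X - 1}" using f(1) g1 by auto
      ultimately have "card X \<le> card {..<card X - 1}" by (intro card_inj_on_le[of "f \<circ> g"]) auto
      moreover have "card X > 0" using finX Xne by auto
      ultimately show False by simp
    qed
  next
    assume "\<not> (\<forall>p\<in>X. \<exists>q\<in>Y. rel R p q)"
    then obtain p0 where p0: "p0 \<in> X" "\<forall>q\<in>Y. \<not> rel R p0 q" by blast
    define Y1 where "Y1 = {q\<in>Y. \<exists>p\<in>X. rel R p q}"
    define Y2 where "Y2 = Y - Y1"
    obtain ps where ps: "set ps = X - {p0}" "distinct ps" using finX by (meson finite_Diff finite_distinct_list)
    have lps: "length ps = card X - 1" using ps finX p0(1) by (metis card_Diff_singleton distinct_card)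
    define f where "f q = (LEAST i. i < length ps \<and> rel R (ps ! i) q)" for q
    have fq: "f q < length ps \<and> rel R (ps ! f q) q" if q: "q \<in> Y1" for q
    proof -
      obtain p where p: "p \<in> X" "rel R p q" "q \<in> Y" using q unfolding Y1_def by blast
      have "p \<noteq> p0" using p p0 by blast
      then obtain i where "i < length ps" "ps ! i = p" using ps p(1) by (metis DiffI in_set_conv_nth singletonD)
      hence "\<exists>i. i < length ps \<and> rel R (ps ! i) q" using p by blast
      thus ?thesis unfolding f_def by (rule LeastI_ex)
    qed
    have "sat_g D Y1 (BDisj D R (replicate (card X - 1) (piF D R)))"
    proof -
      have "\<forall>q\<in>Y1. \<forall>q'\<in>Y1. f q = f q' \<longrightarrow> rel R q q'"
      proof (intro ballI impI)
        fix q q' assume q: "q \<in> Y1" "q' \<in> Y1" and e: "f q = f q'"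
        have pin: "ps ! f q \<in> X" using fq[OF q(1)] ps(1) nth_mem by blast
        have wq: "wpair D R q" "wpair D R q'" using q wY unfolding Y1_def by auto
        have r1: "rel R q (ps ! f q)" using rel_sym fq[OF q(1)] by blast
        have r2: "rel R (ps ! f q) q'" using fq[OF q(2)] e by simp
        show "rel R q q'" by (rule rel_trans[OF sig wq(1) wX[rule_format, OF pin] wq(2) r1 r2])
      qed
      moreover have "\<forall>q\<in>Y1. f q < card X - 1" using fq lps by auto
      ultimately show ?thesis using sat_rep[OF sig, of Y1] wY unfolding Y1_def by auto
    qed
    moreover have "sat_g D Y2 (notX D R X)"
    proof -
      have "\<forall>q\<in>Y2. \<not> (\<exists>p'\<in>X. rel R q p')" unfolding Y2_def Y1_def using rel_sym by blast
      thus ?thesis using sat_notX[OF sig _ X, of Y2] Y unfolding Y2_def by auto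
    qed
    moreover have "Y = Y1 \<union> Y2" unfolding Y2_def Y1_def by auto
    ultimately show "sat_g D Y (NX D R X)" unfolding NX_def by auto
  qed
qed


section \<open>Teams and closure\<close>

lemma empty_sys_systems: "empty_sys \<in> systems D R"
  unfolding systems_def empty_sys_def parent_graph_def by (simp add: acyclic_def)

lemma empty_causal: "({}, empty_sys) \<in> causal_teams D R"
  unfolding causal_teams_def using empty_sys_systems by simp

lemma causal_empty_eq: "T \<in> causal_teams D R \<Longrightarrow> fst T = {} \<Longrightarrow> T = ({}, empty_sys)"
  unfolding causal_teams_def by auto

lemma pts_sub: "T \<in> causal_teams D R \<Longrightarrow> pts T \<subseteq> compat_pairs D R"
  unfolding causal_teams_def compat_pairs_def pts_def by auto

lemma pts_empty: "pts T = {} \<longleftrightarrow> fst T = {}"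
  unfolding pts_def by simp

lemma finite_pts: "sig_ok D R \<Longrightarrow> T \<in> causal_teams D R \<Longrightarrow> finite (pts T)"
  using pts_sub finite_compat finite_subset by metis

lemma sub_causal: "T \<in> causal_teams D R \<Longrightarrow> A \<subseteq> fst T \<Longrightarrow> A \<noteq> {} \<Longrightarrow> (A, snd T) \<in> causal_teams D R"
  unfolding causal_teams_def by (cases T) auto

lemma empty_in_K: "K \<noteq> {} \<Longrightarrow> c_down_closed K \<Longrightarrow> ({}, empty_sys) \<in> K"
proof -
  assume "K \<noteq> {}" "c_down_closed K"
  then obtain T where T: "T \<in> K" by blast
  have "causal_subteam ({}, empty_sys) T" unfolding causal_subteam_def ct_norm_def by auto
  thus ?thesis using T \<open>c_down_closed K\<close> unfolding c_down_closed_def by blast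
qed

lemma sub_in_K: "T \<in> K \<Longrightarrow> c_down_closed K \<Longrightarrow> A \<subseteq> fst T \<Longrightarrow> A \<noteq> {} \<Longrightarrow> (A, snd T) \<in> K"
proof -
  assume "T \<in> K" "c_down_closed K" "A \<subseteq> fst T" "A \<noteq> {}"
  moreover have "causal_subteam (A, snd T) T" unfolding causal_subteam_def ct_norm_def
    using \<open>A \<subseteq> fst T\<close> \<open>A \<noteq> {}\<close> by auto
  ultimately show ?thesis unfolding c_down_closed_def by blast
qed

lemma pts_incl: "(\<forall>q\<in>pts Y. \<exists>p\<in>pts T. rel R q p) \<longleftrightarrow>
   fst Y \<subseteq> fst T \<and> (fst Y \<noteq> {} \<longrightarrow> sys_sim R (snd Y) (snd T))"
  unfolding pts_def rel_def by auto

lemma chiDisj_sem: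
  assumes sig: "sig_ok D R" and Y: "Y \<subseteq> compat_pairs D R" and X: "X \<subseteq> compat_pairs D R" and fX: "finite X"
  shows "sat_g D Y (BDisj D R (map (chi D R) (enum X))) \<longleftrightarrow> (\<forall>q\<in>Y. \<exists>p\<in>X. rel R q p)"
proof -
  have fl: "\<forall>\<phi>\<in>set (map (chi D R) (enum X)). flat D \<phi>" using flat_chi by auto
  have "(\<exists>\<phi>\<in>set (map (chi D R) (enum X)). sat_g D {q} \<phi>) \<longleftrightarrow> (\<exists>p\<in>X. rel R q p)" if q: "q \<in> Y" for q
  proof -
    have wq: "wpair D R q" using q Y compat_wpair by blast
    have L: "sat_g D {q} (chi D R p) \<longleftrightarrow> rel R q p" if "p \<in> X" for p
    proof -
      have wp: "wpair D R p" using that X compat_wpair by blast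
      show ?thesis using sat_chi[OF sig, of "{q}" p] wq wp by simp
    qed
    have "(\<exists>\<phi>\<in>chi D R ` X. sat_g D {q} \<phi>) \<longleftrightarrow> (\<exists>p\<in>X. sat_g D {q} (chi D R p))" by blast
    also have "\<dots> \<longleftrightarrow> (\<exists>p\<in>X. rel R q p)" using L by blast
    finally show ?thesis using enum[OF fX] by simp
  qed
  thus ?thesis unfolding sat_BDisj[OF fl] by blast
qed

lemma wf_chi_c: "sig_ok D R \<Longrightarrow> p \<in> compat_pairs D R \<Longrightarrow> wf_fm D R (chi D R p)"
  using wf_chi compat_wpair by blast

lemma wf_chiDisj: "sig_ok D R \<Longrightarrow> X \<subseteq> compat_pairs D R \<Longrightarrow> finite X \<Longrightarrow> wf_fm D R (BDisj D R (map (chi D R) (enum X)))"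
proof -
  assume sig: "sig_ok D R" and X: "X \<subseteq> compat_pairs D R" and f: "finite X"
  show ?thesis
  proof (intro wf_BDisj[OF sig] ballI)
    fix \<phi> assume "\<phi> \<in> set (map (chi D R) (enum X))"
    then obtain p where "p \<in> X" "\<phi> = chi D R p" using enum[OF f] by auto
    thus "wf_fm D R \<phi>" using wf_chi_c[OF sig] X by blast
  qed
qed

lemma CO_chiDisj: "is_CO (BDisj D R (map (chi D R) (enum X)))"
  using CO_chi by (intro CO_BDisj) auto

lemma wf_NX: assumes sig: "sig_ok D R" shows "wf_fm D R (NX D R X)"
proof -
  have "wf_fm D R (notX D R X)" unfolding notX_def
  proof (intro wf_BDisj[OF sig] ballI)
    fix \<phi> assume "\<phi> \<in> set (map (chi D R) (filter (\<lambda>p. \<not> (\<exists>p'\<in>X. rel R p p')) (enum (compat_pairs D R))))"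
    then obtain p where "p \<in> compat_pairs D R" "\<phi> = chi D R p" using enum[OF finite_compat[OF sig]] by auto
    thus "wf_fm D R \<phi>" using wf_chi_c[OF sig] by blast
  qed
  moreover have "wf_fm D R (BDisj D R (replicate (card X - 1) (piF D R)))"
    using wf_piF[OF sig] by (intro wf_BDisj[OF sig]) auto
  ultimately show ?thesis unfolding NX_def by simp
qed

lemma COD_NX: "is_COD (NX D R X)"
proof -
  have "is_COD (notX D R X)" unfolding notX_def using CO_sub[OF CO_chi] by (intro COD_BDisj) auto
  moreover have "is_COD (BDisj D R (replicate (card X - 1) (piF D R)))"
    using COD_piF by (intro COD_BDisj) auto
  ultimately show ?thesis unfolding NX_def by simp
qed

lemma gequiv_Mrel:
  assumes sig: "sig_ok D R" and T: "T \<subseteq> compat_pairs D R" and S: "S \<subseteq> compat_pairs D R"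
    and e: "g_equiv D R T S"
  shows "Mrel R T S"
  unfolding Mrel_def
proof (intro conjI ballI)
  fix p assume p: "p \<in> T"
  obtain s F where pe: "p = (s, F)" by (cases p)
  have F: "F \<in> systems D R" using T p pe unfolding compat_pairs_def by auto
  have "s \<in> fst ` gsub R F T" using p pe sim_refl unfolding gsub_def by force
  hence "s \<in> fst ` gsub R F S" using e F unfolding g_equiv_def by blast
  then obtain G where "(s, G) \<in> S" "sys_sim R G F" unfolding gsub_def by auto
  thus "\<exists>q\<in>S. rel R p q" using pe sim_sym unfolding rel_def by force
next
  fix q assume q: "q \<in> S"
  obtain s G where qe: "q = (s, G)" by (cases q)
  have G: "G \<in> systems D R" using S q qe unfolding compat_pairs_def by auto
  have "s \<in> fst ` gsub R G S" using q qe sim_refl unfolding gsub_def by force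
  hence "s \<in> fst ` gsub R G T" using e G unfolding g_equiv_def by blast
  then obtain F where "(s, F) \<in> T" "sys_sim R F G" unfolding gsub_def by auto
  thus "\<exists>p\<in>T. rel R p q" using qe unfolding rel_def by force
qed

lemma Mrel_gequiv:
  assumes sig: "sig_ok D R" and T: "T \<subseteq> compat_pairs D R" and S: "S \<subseteq> compat_pairs D R"
    and M: "Mrel R T S"
  shows "g_equiv D R T S"
  unfolding g_equiv_def
proof
  fix F assume F: "F \<in> systems D R"
  have wF: "wsys D R F" using systems_wsys[OF F] .
  have ws: "G \<in> systems D R" if "(s, G) \<in> compat_pairs D R" for s G using that unfolding compat_pairs_def by auto
  show "fst ` gsub R F T = fst ` gsub R F S"
  proof
    show "fst ` gsub R F T \<subseteq> fst ` gsub R F S"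
    proof
      fix s assume "s \<in> fst ` gsub R F T"
      then obtain G where G: "(s, G) \<in> T" "sys_sim R G F" unfolding gsub_def by auto
      then obtain q where q: "q \<in> S" "rel R (s, G) q" using M unfolding Mrel_def by blast
      obtain G' where qe: "q = (s, G')" and sim: "sys_sim R G G'" using q(2) unfolding rel_def by (cases q) auto
      have "sys_sim R G' F" using sim_trans[OF sig systems_wsys[OF ws] systems_wsys[OF ws] wF sim_sym[OF sim] G(2)]
        q(1) qe G(1) S T by blast
      thus "s \<in> fst ` gsub R F S" using q(1) qe unfolding gsub_def by force
    qed
  next
    show "fst ` gsub R F S \<subseteq> fst ` gsub R F T"
    proof
      fix s assume "s \<in> fst ` gsub R F S"
      then obtain G where G: "(s, G) \<in> S" "sys_sim R G F" unfolding gsub_def by auto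
      then obtain p where p: "p \<in> T" "rel R p (s, G)" using M unfolding Mrel_def by blast
      obtain G' where pe: "p = (s, G')" and sim: "sys_sim R G' G" using p(2) unfolding rel_def by (cases p) auto
      have "sys_sim R G' F" using sim_trans[OF sig systems_wsys[OF ws] systems_wsys[OF ws] wF sim G(2)]
        p(1) pe G(1) S T by blast
      thus "s \<in> fst ` gsub R F T" using p(1) pe unfolding gsub_def by force
    qed
  qed
qed


lemma sound_c:
  assumes sig: "sig_ok D R" and wf: "wf_fm D R \<phi>"
  defines "K \<equiv> {T \<in> causal_teams D R. sat_c D T \<phi>}"
  shows "c_down_closed K \<and> c_equiv_closed D R K"
proof
  show "c_down_closed K" unfolding c_down_closed_def
  proof (intro ballI allI impI)
    fix T S assume T: "T \<in> K" and sub: "causal_subteam S T"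
    then obtain S' where S': "S' \<subseteq> fst T" "S = ct_norm (S', snd T)" unfolding causal_subteam_def by blast
    have Tc: "T \<in> causal_teams D R" and Ts: "sat_g D (pts T) \<phi>" using T unfolding K_def sat_c_pts by auto
    show "S \<in> K"
    proof (cases "S' = {}")
      case True
      hence "S = ({}, empty_sys)" using S' unfolding ct_norm_def by simp
      thus ?thesis unfolding K_def sat_c_pts pts_def by (simp add: empty_causal sat_empty)
    next
      case False
      hence Se: "S = (S', snd T)" using S' unfolding ct_norm_def by simp
      have "pts S \<subseteq> pts T" unfolding Se pts_def using S'(1) by auto
      hence "sat_g D (pts S) \<phi>" using sat_down Ts by blast
      thus ?thesis unfolding K_def sat_c_pts using sub_causal[OF Tc S'(1) False] Se by simp
    qed
  qed
  show "c_equiv_closed D R K" unfolding c_equiv_closed_def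
  proof (intro ballI impI)
    fix T S assume T: "T \<in> K" and S: "S \<in> causal_teams D R" and e: "ct_equiv R T S"
    have Tc: "T \<in> causal_teams D R" and Ts: "sat_g D (pts T) \<phi>" using T unfolding K_def sat_c_pts by auto
    have fe: "fst T = fst S" and sim: "sys_sim R (snd T) (snd S)" using e unfolding ct_equiv_def by auto
    have M: "Mrel R (pts T) (pts S)" unfolding Mrel_def pts_def rel_def using fe sim by auto
    have "sat_g D (pts S) \<phi>"
      using sat_inv[OF sig wf _ _ M Ts] pts_sub[OF Tc] pts_sub[OF S] compat_wpair by blast
    thus "S \<in> K" unfolding K_def sat_c_pts using S by simp
  qed
qed

lemma sound_g:
  assumes sig: "sig_ok D R" and wf: "wf_fm D R \<phi>"
  defines "K \<equiv> {T \<in> gen_teams D R. sat_g D T \<phi>}"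
  shows "g_down_closed K \<and> g_equiv_closed D R K"
proof
  show "g_down_closed K" unfolding g_down_closed_def K_def gen_teams_def
    using sat_down by blast
  show "g_equiv_closed D R K" unfolding g_equiv_closed_def
  proof (intro ballI impI)
    fix T S assume T: "T \<in> K" and S: "S \<in> gen_teams D R" and e: "g_equiv D R T S"
    have Tc: "T \<subseteq> compat_pairs D R" and Ts: "sat_g D T \<phi>" using T unfolding K_def gen_teams_def by auto
    have Sc: "S \<subseteq> compat_pairs D R" using S unfolding gen_teams_def by auto
    have M: "Mrel R T S" by (rule gequiv_Mrel[OF sig Tc Sc e])
    have "sat_g D S \<phi>" using sat_inv[OF sig wf _ _ M Ts] Tc Sc compat_wpair by blast
    thus "S \<in> K" unfolding K_def using S by simp
  qed
qed

lemma c_char: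
  assumes sig: "sig_ok D R" and K: "K \<subseteq> causal_teams D R" "K \<noteq> {}" and dc: "c_down_closed K"
    and ec: "c_equiv_closed D R K" and Y: "Y \<in> causal_teams D R"
  shows "Y \<in> K \<longleftrightarrow> (pts Y = {} \<or> (\<exists>T\<in>K. \<forall>q\<in>pts Y. \<exists>p\<in>pts T. rel R q p))"
proof
  assume "Y \<in> K" thus "pts Y = {} \<or> (\<exists>T\<in>K. \<forall>q\<in>pts Y. \<exists>p\<in>pts T. rel R q p)" using rel_refl by blast
next
  assume H: "pts Y = {} \<or> (\<exists>T\<in>K. \<forall>q\<in>pts Y. \<exists>p\<in>pts T. rel R q p)"
  show "Y \<in> K"
  proof (cases "fst Y = {}")
    case True thus ?thesis using causal_empty_eq[OF Y] empty_in_K[OF K(2) dc] by simp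
  next
    case False
    then obtain T where T: "T \<in> K" "fst Y \<subseteq> fst T" "sys_sim R (snd Y) (snd T)"
      using H pts_incl pts_empty by metis
    have "(fst Y, snd T) \<in> K" by (rule sub_in_K[OF T(1) dc T(2) False])
    moreover have "ct_equiv R (fst Y, snd T) Y" unfolding ct_equiv_def using False sim_sym[OF T(3)] by simp
    ultimately show ?thesis using ec Y unfolding c_equiv_closed_def by blast
  qed
qed

lemma compl_c_sq:
  assumes sig: "sig_ok D R" and K: "K \<subseteq> causal_teams D R" "K \<noteq> {}" and dc: "c_down_closed K"
    and ec: "c_equiv_closed D R K"
  shows "\<exists>\<phi>. is_COsq \<phi> \<and> wf_fm D R \<phi> \<and> K = {T \<in> causal_teams D R. sat_c D T \<phi>}"
proof -
  have fK: "finite K" using finite_causal[OF sig] K(1) finite_subset by blast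
  define \<phi> where "\<phi> = BGDisj D R (map (\<lambda>T. BDisj D R (map (chi D R) (enum (pts T)))) (enum K))"
  have "is_COsq \<phi>" unfolding \<phi>_def using CO_sub[OF CO_chiDisj] by (intro COsq_BGDisj) auto
  moreover have "wf_fm D R \<phi>" unfolding \<phi>_def
  proof (intro wf_BGDisj[OF sig] ballI)
    fix \<psi> assume "\<psi> \<in> set (map (\<lambda>T. BDisj D R (map (chi D R) (enum (pts T)))) (enum K))"
    then obtain T where T: "T \<in> K" "\<psi> = BDisj D R (map (chi D R) (enum (pts T)))" using enum[OF fK] by auto
    have Tc: "T \<in> causal_teams D R" using T K(1) by blast
    show "wf_fm D R \<psi>" unfolding T(2) by (rule wf_chiDisj[OF sig pts_sub[OF Tc] finite_pts[OF sig Tc]])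
  qed
  moreover have "K = {T \<in> causal_teams D R. sat_c D T \<phi>}"
  proof (intro set_eqI iffI)
    fix Y assume Y: "Y \<in> K"
    hence Yc: "Y \<in> causal_teams D R" using K by blast
    have "sat_g D (pts Y) (BDisj D R (map (chi D R) (enum (pts Y))))"
      using chiDisj_sem[OF sig pts_sub[OF Yc] pts_sub[OF Yc] finite_pts[OF sig Yc]] rel_refl by blast
    hence "sat_g D (pts Y) \<phi>" unfolding \<phi>_def sat_BGDisj using Y enum[OF fK] by auto
    thus "Y \<in> {T \<in> causal_teams D R. sat_c D T \<phi>}" using Yc by (simp add: sat_c_pts)
  next
    fix Y assume "Y \<in> {T \<in> causal_teams D R. sat_c D T \<phi>}"
    hence Yc: "Y \<in> causal_teams D R" and s: "sat_g D (pts Y) \<phi>" by (auto simp: sat_c_pts)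
    have "pts Y = {} \<or> (\<exists>T\<in>K. sat_g D (pts Y) (BDisj D R (map (chi D R) (enum (pts T)))))"
      using s unfolding \<phi>_def sat_BGDisj using enum[OF fK] by auto
    hence "pts Y = {} \<or> (\<exists>T\<in>K. \<forall>q\<in>pts Y. \<exists>p\<in>pts T. rel R q p)"
      using chiDisj_sem[OF sig pts_sub[OF Yc] pts_sub finite_pts[OF sig]] K(1) by blast
    thus "Y \<in> K" using c_char[OF sig K dc ec Yc] by blast
  qed
  ultimately show ?thesis by blast
qed

lemma compl_c_cod:
  assumes sig: "sig_ok D R" and K: "K \<subseteq> causal_teams D R" "K \<noteq> {}" and dc: "c_down_closed K"
    and ec: "c_equiv_closed D R K"
  shows "\<exists>\<phi>. is_COD \<phi> \<and> wf_fm D R \<phi> \<and> K = {T \<in> causal_teams D R. sat_c D T \<phi>}"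
proof -
  define Bad where "Bad = {T \<in> causal_teams D R. T \<notin> K}"
  have fB: "finite Bad" using finite_causal[OF sig] unfolding Bad_def by simp
  define \<phi> where "\<phi> = BConj D R (map (\<lambda>T. NX D R (pts T)) (enum Bad))"
  have "is_COD \<phi>" unfolding \<phi>_def using COD_NX by (intro COD_BConj) auto
  moreover have "wf_fm D R \<phi>" unfolding \<phi>_def using wf_NX[OF sig] by (intro wf_BConj[OF sig]) auto
  moreover have "K = {T \<in> causal_teams D R. sat_c D T \<phi>}"
  proof -
    have NXs: "sat_g D (pts Y) (NX D R (pts T)) \<longleftrightarrow> \<not> (\<forall>p\<in>pts T. \<exists>q\<in>pts Y. rel R p q)"
      if Y: "Y \<in> causal_teams D R" and T: "T \<in> Bad" for Y T
    proof -
      have Tc: "T \<in> causal_teams D R" and TK: "T \<notin> K" using T unfolding Bad_def by auto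
      have "fst T \<noteq> {}" using causal_empty_eq[OF Tc] empty_in_K[OF K(2) dc] TK by auto
      hence ne: "pts T \<noteq> {}" using pts_empty by blast
      have red: "\<forall>p\<in>pts T. \<forall>p'\<in>pts T. rel R p p' \<longrightarrow> p = p'" unfolding pts_def rel_def by auto
      show ?thesis by (rule NX_sem[OF sig pts_sub[OF Y] pts_sub[OF Tc] ne red])
    qed
    have key: "Y \<in> K \<longleftrightarrow> (\<forall>T\<in>Bad. \<not> (\<forall>p\<in>pts T. \<exists>q\<in>pts Y. rel R p q))"
      if Y: "Y \<in> causal_teams D R" for Y
    proof
      assume YK: "Y \<in> K"
      show "\<forall>T\<in>Bad. \<not> (\<forall>p\<in>pts T. \<exists>q\<in>pts Y. rel R p q)"
      proof (intro ballI notI)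
        fix T assume T: "T \<in> Bad" and inc: "\<forall>p\<in>pts T. \<exists>q\<in>pts Y. rel R p q"
        have Tc: "T \<in> causal_teams D R" and TK: "T \<notin> K" using T unfolding Bad_def by auto
        have ne: "fst T \<noteq> {}" using causal_empty_eq[OF Tc] empty_in_K[OF K(2) dc] TK by auto
        have sub: "fst T \<subseteq> fst Y" and sim: "sys_sim R (snd T) (snd Y)"
          using inc ne unfolding pts_def rel_def by auto
        have "(fst T, snd Y) \<in> K" by (rule sub_in_K[OF YK dc sub ne])
        moreover have "ct_equiv R (fst T, snd Y) T" unfolding ct_equiv_def using ne sim_sym[OF sim] by simp
        ultimately have "T \<in> K" using ec Tc unfolding c_equiv_closed_def by blast
        thus False using TK by blast
      qed
    next
      assume H: "\<forall>T\<in>Bad. \<not> (\<forall>p\<in>pts T. \<exists>q\<in>pts Y. rel R p q)"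
      show "Y \<in> K"
      proof (rule ccontr)
        assume "Y \<notin> K"
        hence "Y \<in> Bad" using Y unfolding Bad_def by simp
        thus False using H rel_refl by blast
      qed
    qed
    show ?thesis
    proof (intro set_eqI iffI)
      fix Y assume YK: "Y \<in> K"
      hence Y: "Y \<in> causal_teams D R" using K by blast
      have "sat_g D (pts Y) \<phi>" unfolding \<phi>_def sat_BConj using key[OF Y] YK NXs[OF Y] enum[OF fB] by auto
      thus "Y \<in> {T \<in> causal_teams D R. sat_c D T \<phi>}" using Y by (simp add: sat_c_pts)
    next
      fix Y assume "Y \<in> {T \<in> causal_teams D R. sat_c D T \<phi>}"
      hence Y: "Y \<in> causal_teams D R" and s: "sat_g D (pts Y) \<phi>" by (auto simp: sat_c_pts)
      have "\<forall>T\<in>Bad. sat_g D (pts Y) (NX D R (pts T))" using s unfolding \<phi>_def sat_BConj using enum[OF fB] by auto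
      thus "Y \<in> K" using key[OF Y] NXs[OF Y] by blast
    qed
  qed
  ultimately show ?thesis by blast
qed


lemma g_char:
  assumes sig: "sig_ok D R" and K: "K \<subseteq> gen_teams D R" "K \<noteq> {}" and dc: "g_down_closed K"
    and ec: "g_equiv_closed D R K" and Y: "Y \<in> gen_teams D R"
  shows "Y \<in> K \<longleftrightarrow> (Y = {} \<or> (\<exists>T\<in>K. \<forall>q\<in>Y. \<exists>p\<in>T. rel R q p))"
proof
  assume "Y \<in> K" thus "Y = {} \<or> (\<exists>T\<in>K. \<forall>q\<in>Y. \<exists>p\<in>T. rel R q p)" using rel_refl by blast
next
  assume H: "Y = {} \<or> (\<exists>T\<in>K. \<forall>q\<in>Y. \<exists>p\<in>T. rel R q p)"
  show "Y \<in> K"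
  proof (cases "Y = {}")
    case True
    obtain T where "T \<in> K" using K(2) by blast
    thus ?thesis using dc True unfolding g_down_closed_def by blast
  next
    case False
    then obtain T where T: "T \<in> K" "\<forall>q\<in>Y. \<exists>p\<in>T. rel R q p" using H by blast
    define T' where "T' = {p\<in>T. \<exists>q\<in>Y. rel R q p}"
    have "T' \<subseteq> T" unfolding T'_def by blast
    hence T'K: "T' \<in> K" using dc T(1) unfolding g_down_closed_def by blast
    have Tc: "T \<subseteq> compat_pairs D R" using T(1) K(1) unfolding gen_teams_def by blast
    have Yc: "Y \<subseteq> compat_pairs D R" using Y unfolding gen_teams_def by blast
    have "Mrel R T' Y" unfolding Mrel_def
    proof (intro conjI ballI)
      fix p assume "p \<in> T'"
      then obtain q where "q \<in> Y" "rel R q p" unfolding T'_def by blast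
      thus "\<exists>q\<in>Y. rel R p q" using rel_sym by blast
    next
      fix q assume q: "q \<in> Y"
      then obtain p where p: "p \<in> T" "rel R q p" using T(2) by blast
      hence "p \<in> T'" using q unfolding T'_def by blast
      thus "\<exists>p\<in>T'. rel R p q" using rel_sym[OF p(2)] by blast
    qed
    moreover have "T' \<subseteq> compat_pairs D R" using Tc unfolding T'_def by blast
    ultimately have "g_equiv D R T' Y" using Mrel_gequiv[OF sig _ Yc] by blast
    thus ?thesis using ec T'K Y unfolding g_equiv_closed_def by blast
  qed
qed

lemma compl_g_sq:
  assumes sig: "sig_ok D R" and K: "K \<subseteq> gen_teams D R" "K \<noteq> {}" and dc: "g_down_closed K"
    and ec: "g_equiv_closed D R K"
  shows "\<exists>\<phi>. is_COsq \<phi> \<and> wf_fm D R \<phi> \<and> K = {T \<in> gen_teams D R. sat_g D T \<phi>}"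
proof -
  have fG: "finite (gen_teams D R)" unfolding gen_teams_def using finite_compat[OF sig] by simp
  have fK: "finite K" using fG K(1) finite_subset by blast
  have Kc: "T \<subseteq> compat_pairs D R" "finite T" if "T \<in> K" for T
    using that K(1) finite_compat[OF sig] finite_subset unfolding gen_teams_def by blast+
  define \<phi> where "\<phi> = BGDisj D R (map (\<lambda>T. BDisj D R (map (chi D R) (enum T))) (enum K))"
  have "is_COsq \<phi>" unfolding \<phi>_def using CO_sub[OF CO_chiDisj] by (intro COsq_BGDisj) auto
  moreover have "wf_fm D R \<phi>" unfolding \<phi>_def
  proof (intro wf_BGDisj[OF sig] ballI)
    fix \<psi> assume "\<psi> \<in> set (map (\<lambda>T. BDisj D R (map (chi D R) (enum T))) (enum K))"
    then obtain T where T: "T \<in> K" "\<psi> = BDisj D R (map (chi D R) (enum T))" using enum[OF fK] by auto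
    show "wf_fm D R \<psi>" unfolding T(2) by (rule wf_chiDisj[OF sig Kc[OF T(1)]])
  qed
  moreover have "K = {T \<in> gen_teams D R. sat_g D T \<phi>}"
  proof (intro set_eqI iffI)
    fix Y assume Y: "Y \<in> K"
    have "sat_g D Y (BDisj D R (map (chi D R) (enum Y)))"
      using chiDisj_sem[OF sig Kc(1)[OF Y] Kc[OF Y]] rel_refl by blast
    hence "sat_g D Y \<phi>" unfolding \<phi>_def sat_BGDisj using Y enum[OF fK] by auto
    thus "Y \<in> {T \<in> gen_teams D R. sat_g D T \<phi>}" using Y K(1) by blast
  next
    fix Y assume "Y \<in> {T \<in> gen_teams D R. sat_g D T \<phi>}"
    hence Y: "Y \<in> gen_teams D R" and s: "sat_g D Y \<phi>" by auto
    have Yc: "Y \<subseteq> compat_pairs D R" using Y unfolding gen_teams_def by blast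
    have "Y = {} \<or> (\<exists>T\<in>K. sat_g D Y (BDisj D R (map (chi D R) (enum T))))"
      using s unfolding \<phi>_def sat_BGDisj using enum[OF fK] by auto
    hence "Y = {} \<or> (\<exists>T\<in>K. \<forall>q\<in>Y. \<exists>p\<in>T. rel R q p)"
      using chiDisj_sem[OF sig Yc] Kc by blast
    thus "Y \<in> K" using g_char[OF sig K dc ec Y] by blast
  qed
  ultimately show ?thesis by blast
qed

lemma compl_g_cod:
  assumes sig: "sig_ok D R" and K: "K \<subseteq> gen_teams D R" "K \<noteq> {}" and dc: "g_down_closed K"
    and ec: "g_equiv_closed D R K"
  shows "\<exists>\<phi>. is_COD \<phi> \<and> wf_fm D R \<phi> \<and> K = {T \<in> gen_teams D R. sat_g D T \<phi>}"
proof -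
  have fG: "finite (gen_teams D R)" unfolding gen_teams_def using finite_compat[OF sig] by simp
  have emp: "{} \<in> K" using K(2) dc unfolding g_down_closed_def by blast
  define Bad where "Bad = {X \<in> gen_teams D R. X \<notin> K \<and> (\<forall>p\<in>X. \<forall>p'\<in>X. rel R p p' \<longrightarrow> p = p')}"
  have fB: "finite Bad" using fG unfolding Bad_def by simp
  define \<phi> where "\<phi> = BConj D R (map (NX D R) (enum Bad))"
  have "is_COD \<phi>" unfolding \<phi>_def using COD_NX by (intro COD_BConj) auto
  moreover have "wf_fm D R \<phi>" unfolding \<phi>_def using wf_NX[OF sig] by (intro wf_BConj[OF sig]) auto
  moreover have "K = {T \<in> gen_teams D R. sat_g D T \<phi>}"
  proof -
    have NXs: "sat_g D Y (NX D R X) \<longleftrightarrow> \<not> (\<forall>p\<in>X. \<exists>q\<in>Y. rel R p q)"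
      if Y: "Y \<in> gen_teams D R" and X: "X \<in> Bad" for Y X
    proof -
      have ne: "X \<noteq> {}" using X emp unfolding Bad_def by auto
      have Xc: "X \<subseteq> compat_pairs D R" and red: "\<forall>p\<in>X. \<forall>p'\<in>X. rel R p p' \<longrightarrow> p = p'"
        using X unfolding Bad_def gen_teams_def by auto
      have Yc: "Y \<subseteq> compat_pairs D R" using Y unfolding gen_teams_def by auto
      show ?thesis by (rule NX_sem[OF sig Yc Xc ne red])
    qed
    have key: "Y \<in> K \<longleftrightarrow> (\<forall>X\<in>Bad. \<not> (\<forall>p\<in>X. \<exists>q\<in>Y. rel R p q))"
      if Y: "Y \<in> gen_teams D R" for Y
    proof
      assume YK: "Y \<in> K"
      show "\<forall>X\<in>Bad. \<not> (\<forall>p\<in>X. \<exists>q\<in>Y. rel R p q)"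
      proof (intro ballI notI)
        fix X assume X: "X \<in> Bad" and inc: "\<forall>p\<in>X. \<exists>q\<in>Y. rel R p q"
        have Xg: "X \<in> gen_teams D R" and XK: "X \<notin> K" using X unfolding Bad_def by auto
        define Y' where "Y' = {q\<in>Y. \<exists>p\<in>X. rel R p q}"
        have "Y' \<subseteq> Y" unfolding Y'_def by blast
        hence Y'K: "Y' \<in> K" using dc YK unfolding g_down_closed_def by blast
        have "Mrel R Y' X" unfolding Mrel_def
        proof (intro conjI ballI)
          fix q assume "q \<in> Y'"
          then obtain p where "p \<in> X" "rel R p q" unfolding Y'_def by blast
          thus "\<exists>p\<in>X. rel R q p" using rel_sym by blast
        next
          fix p assume p: "p \<in> X"
          then obtain q where q: "q \<in> Y" "rel R p q" using inc by blast
          hence "q \<in> Y'" using p unfolding Y'_def by blast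
          thus "\<exists>q\<in>Y'. rel R q p" using rel_sym[OF q(2)] by blast
        qed
        moreover have "Y' \<subseteq> compat_pairs D R" "X \<subseteq> compat_pairs D R"
          using Y Xg unfolding Y'_def gen_teams_def by auto
        ultimately have "g_equiv D R Y' X" using Mrel_gequiv[OF sig] by blast
        hence "X \<in> K" using ec Y'K Xg unfolding g_equiv_closed_def by blast
        thus False using XK by blast
      qed
    next
      assume H: "\<forall>X\<in>Bad. \<not> (\<forall>p\<in>X. \<exists>q\<in>Y. rel R p q)"
      show "Y \<in> K"
      proof (rule ccontr)
        assume YK: "Y \<notin> K"
        have Yc: "Y \<subseteq> compat_pairs D R" using Y unfolding gen_teams_def by blast
        have wY: "\<forall>q\<in>Y. wpair D R q" using Yc compat_wpair by blast
        define rep where "rep q = (SOME q'. q' \<in> Y \<and> rel R q q')" for q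
        have rep: "rep q \<in> Y \<and> rel R q (rep q)" if "q \<in> Y" for q
          unfolding rep_def using that rel_refl by (metis (mono_tags, lifting) someI_ex)
        define X where "X = rep ` Y"
        have XY: "X \<subseteq> Y" unfolding X_def using rep by blast
        have red: "\<forall>p\<in>X. \<forall>p'\<in>X. rel R p p' \<longrightarrow> p = p'"
        proof (intro ballI impI)
          fix p p' assume p: "p \<in> X" "p' \<in> X" and r: "rel R p p'"
          obtain q q' where q: "q \<in> Y" "q' \<in> Y" "p = rep q" "p' = rep q'" using p unfolding X_def by blast
          have wp: "wpair D R p" "wpair D R p'" using XY p wY by auto
          have wq: "wpair D R q" "wpair D R q'" using q wY by auto
          have r0: "rel R q p" using rep[OF q(1)] q(3) by simp
          have r1: "rel R q p'" by (rule rel_trans[OF sig wq(1) wp(1) wp(2) r0 r])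
          have r2: "rel R p' q'" using rel_sym rep[OF q(2)] q(4) by blast
          have qq: "rel R q q'" by (rule rel_trans[OF sig wq(1) wp(2) wq(2) r1 r2])
          have pe: "(\<lambda>x. x \<in> Y \<and> rel R q x) = (\<lambda>x. x \<in> Y \<and> rel R q' x)"
          proof
            fix x show "(x \<in> Y \<and> rel R q x) = (x \<in> Y \<and> rel R q' x)"
            proof
              assume h: "x \<in> Y \<and> rel R q x"
              hence wx: "wpair D R x" using wY by blast
              show "x \<in> Y \<and> rel R q' x" using h rel_trans[OF sig wq(2) wq(1) wx rel_sym[OF qq]] by blast
            next
              assume h: "x \<in> Y \<and> rel R q' x"
              hence wx: "wpair D R x" using wY by blast
              show "x \<in> Y \<and> rel R q x" using h rel_trans[OF sig wq(1) wq(2) wx qq] by blast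
            qed
          qed
          have "rep q = rep q'" unfolding rep_def by (rule arg_cong[where f = Eps, OF pe])
          thus "p = p'" using q by simp
        qed
        have Xg: "X \<in> gen_teams D R" using XY Y unfolding gen_teams_def by auto
        have M: "Mrel R X Y" unfolding Mrel_def
        proof (intro conjI ballI)
          fix p assume "p \<in> X"
          then obtain q where q: "q \<in> Y" "p = rep q" unfolding X_def by blast
          thus "\<exists>q\<in>Y. rel R p q" using rep[OF q(1)] rel_sym by blast
        next
          fix q assume q: "q \<in> Y"
          hence "rep q \<in> X" unfolding X_def by blast
          thus "\<exists>p\<in>X. rel R p q" using rep[OF q] rel_sym by blast
        qed
        have "X \<notin> K"
        proof
          assume "X \<in> K"
          moreover have "g_equiv D R X Y" using Mrel_gequiv[OF sig _ Yc M] XY Yc by blast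
          ultimately have "Y \<in> K" using ec Y unfolding g_equiv_closed_def by blast
          thus False using YK by blast
        qed
        hence "X \<in> Bad" unfolding Bad_def using Xg red by blast
        moreover have "\<forall>p\<in>X. \<exists>q\<in>Y. rel R p q" using XY rel_refl by blast
        ultimately show False using H by blast
      qed
    qed
    show ?thesis
    proof (intro set_eqI iffI)
      fix Y assume YK: "Y \<in> K"
      hence Y: "Y \<in> gen_teams D R" using K by blast
      have "sat_g D Y \<phi>" unfolding \<phi>_def sat_BConj using key[OF Y] YK NXs[OF Y] enum[OF fB] by auto
      thus "Y \<in> {T \<in> gen_teams D R. sat_g D T \<phi>}" using Y by simp
    next
      fix Y assume "Y \<in> {T \<in> gen_teams D R. sat_g D T \<phi>}"
      hence Y: "Y \<in> gen_teams D R" and s: "sat_g D Y \<phi>" by auto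
      have "\<forall>X\<in>Bad. sat_g D Y (NX D R X)" using s unfolding \<phi>_def sat_BConj using enum[OF fB] by auto
      thus "Y \<in> K" using key[OF Y] NXs[OF Y] by blast
    qed
  qed
  ultimately show ?thesis by blast
qed

lemma main_c:
  assumes sig: "sig_ok D R" and K: "K \<subseteq> causal_teams D R \<and> K \<noteq> {}"
  shows "((c_down_closed K \<and> c_equiv_closed D R K) \<longleftrightarrow>
               (\<exists>\<phi>. is_COsq \<phi> \<and> wf_fm D R \<phi> \<and> K = {T \<in> causal_teams D R. sat_c D T \<phi>}))
          \<and> ((c_down_closed K \<and> c_equiv_closed D R K) \<longleftrightarrow>
               (\<exists>\<phi>. is_COD \<phi> \<and> wf_fm D R \<phi> \<and> K = {T \<in> causal_teams D R. sat_c D T \<phi>}))"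
proof (rule conjI; rule iffI)
  assume "c_down_closed K \<and> c_equiv_closed D R K"
  thus "\<exists>\<phi>. is_COsq \<phi> \<and> wf_fm D R \<phi> \<and> K = {T \<in> causal_teams D R. sat_c D T \<phi>}"
    using compl_c_sq[OF sig] K by blast
next
  assume "\<exists>\<phi>. is_COsq \<phi> \<and> wf_fm D R \<phi> \<and> K = {T \<in> causal_teams D R. sat_c D T \<phi>}"
  thus "c_down_closed K \<and> c_equiv_closed D R K" using sound_c[OF sig] by blast
next
  assume "c_down_closed K \<and> c_equiv_closed D R K"
  thus "\<exists>\<phi>. is_COD \<phi> \<and> wf_fm D R \<phi> \<and> K = {T \<in> causal_teams D R. sat_c D T \<phi>}"
    using compl_c_cod[OF sig] K by blast
next
  assume "\<exists>\<phi>. is_COD \<phi> \<and> wf_fm D R \<phi> \<and> K = {T \<in> causal_teams D R. sat_c D T \<phi>}"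
  thus "c_down_closed K \<and> c_equiv_closed D R K" using sound_c[OF sig] by blast
qed

lemma main_g:
  assumes sig: "sig_ok D R" and K: "K \<subseteq> gen_teams D R \<and> K \<noteq> {}"
  shows "((g_down_closed K \<and> g_equiv_closed D R K) \<longleftrightarrow>
               (\<exists>\<phi>. is_COsq \<phi> \<and> wf_fm D R \<phi> \<and> K = {T \<in> gen_teams D R. sat_g D T \<phi>}))
          \<and> ((g_down_closed K \<and> g_equiv_closed D R K) \<longleftrightarrow>
               (\<exists>\<phi>. is_COD \<phi> \<and> wf_fm D R \<phi> \<and> K = {T \<in> gen_teams D R. sat_g D T \<phi>}))"
proof (rule conjI; rule iffI)
  assume "g_down_closed K \<and> g_equiv_closed D R K"
  thus "\<exists>\<phi>. is_COsq \<phi> \<and> wf_fm D R \<phi> \<and> K = {T \<in> gen_teams D R. sat_g D T \<phi>}"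
    using compl_g_sq[OF sig] K by blast
next
  assume "\<exists>\<phi>. is_COsq \<phi> \<and> wf_fm D R \<phi> \<and> K = {T \<in> gen_teams D R. sat_g D T \<phi>}"
  thus "g_down_closed K \<and> g_equiv_closed D R K" using sound_g[OF sig] by blast
next
  assume "g_down_closed K \<and> g_equiv_closed D R K"
  thus "\<exists>\<phi>. is_COD \<phi> \<and> wf_fm D R \<phi> \<and> K = {T \<in> gen_teams D R. sat_g D T \<phi>}"
    using compl_g_cod[OF sig] K by blast
next
  assume "\<exists>\<phi>. is_COD \<phi> \<and> wf_fm D R \<phi> \<and> K = {T \<in> gen_teams D R. sat_g D T \<phi>}"
  thus "g_down_closed K \<and> g_equiv_closed D R K" using sound_g[OF sig] by blast
qed

theorem theorem5p1:
  fixes D :: "'v set" and R :: "'v \<Rightarrow> 'a set"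
  assumes "sig_ok D R"
  shows "(\<forall>K. K \<subseteq> causal_teams D R \<and> K \<noteq> {} \<longrightarrow>
            ((c_down_closed K \<and> c_equiv_closed D R K) \<longleftrightarrow>
               (\<exists>\<phi>. is_COsq \<phi> \<and> wf_fm D R \<phi> \<and> K = {T \<in> causal_teams D R. sat_c D T \<phi>}))
          \<and> ((c_down_closed K \<and> c_equiv_closed D R K) \<longleftrightarrow>
               (\<exists>\<phi>. is_COD \<phi> \<and> wf_fm D R \<phi> \<and> K = {T \<in> causal_teams D R. sat_c D T \<phi>})))
       \<and> (\<forall>K. K \<subseteq> gen_teams D R \<and> K \<noteq> {} \<longrightarrow>
            ((g_down_closed K \<and> g_equiv_closed D R K) \<longleftrightarrow>
               (\<exists>\<phi>. is_COsq \<phi> \<and> wf_fm D R \<phi> \<and> K = {T \<in> gen_teams D R. sat_g D T \<phi>}))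
          \<and> ((g_down_closed K \<and> g_equiv_closed D R K) \<longleftrightarrow>
               (\<exists>\<phi>. is_COD \<phi> \<and> wf_fm D R \<phi> \<and> K = {T \<in> gen_teams D R. sat_g D T \<phi>})))"
proof (rule conjI)
  show "\<forall>K. K \<subseteq> causal_teams D R \<and> K \<noteq> {} \<longrightarrow>
            ((c_down_closed K \<and> c_equiv_closed D R K) \<longleftrightarrow>
               (\<exists>\<phi>. is_COsq \<phi> \<and> wf_fm D R \<phi> \<and> K = {T \<in> causal_teams D R. sat_c D T \<phi>}))
          \<and> ((c_down_closed K \<and> c_equiv_closed D R K) \<longleftrightarrow>
               (\<exists>\<phi>. is_COD \<phi> \<and> wf_fm D R \<phi> \<and> K = {T \<in> causal_teams D R. sat_c D T \<phi>}))"
    using main_c[OF assms] by blast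
  show "\<forall>K. K \<subseteq> gen_teams D R \<and> K \<noteq> {} \<longrightarrow>
            ((g_down_closed K \<and> g_equiv_closed D R K) \<longleftrightarrow>
               (\<exists>\<phi>. is_COsq \<phi> \<and> wf_fm D R \<phi> \<and> K = {T \<in> gen_teams D R. sat_g D T \<phi>}))
          \<and> ((g_down_closed K \<and> g_equiv_closed D R K) \<longleftrightarrow>
               (\<exists>\<phi>. is_COD \<phi> \<and> wf_fm D R \<phi> \<and> K = {T \<in> gen_teams D R. sat_g D T \<phi>}))"
    using main_g[OF assms] by blast
qed

end
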